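(* Let $q$ be a prime power. For $i=1,2$, let $\mathcal{C}_i$ be an $[n,k_i,d_i]_q$ linear code with generator matrix $G_i$, and let $\mathcal{C}=\{(\mathbf{u},\mathbf{u}+\mathbf{v}):\ \mathbf{u}\in\mathcal{C}_1,\ \mathbf{v}\in\mathcal{C}_2\}\subseteq\mathbb{F}_q^{2n}$. Then: 1) $\mathcal{C}$ is a $[2n,k_1+k_2,\min\{2d_1,d_2\}]_q$ linear code with generator matrix $\begin{pmatrix} G_1 & G_1\\ O_{k_2\times n} & G_2\end{pmatrix}$. 2) (Euclidean case) Let $l_2=\dim(\mathrm{Hull}_E(\mathcal{C}_2))$. If $q=2^m$ for some $m$, or $\mathcal{C}_1$ is Euclidean self-orthogonal, then $$2\dim(\mathcal{C}_1\cap\mathcal{C}_2^{\perp_E})+l_2-k_1\le \dim(\mathrm{Hull}_E(\mathcal{C}))\le 2\dim(\mathcal{C}_1\cap\mathcal{C}_2^{\perp_E})+k_2-k_1;$$ moreover, if in addition $\mathcal{C}_2$ is Euclidean self-orthogonal, then $\dim(\mathrm{Hull}_E(\mathcal{C}))=2\dim(\mathcal{C}_1\cap\mathcal{C}_2^{\perp_E})+k_2-k_1$. 3) (Hermitian case, $q$ an even power of a prime) Let $l_2=\dim(\mathrm{Hull}_H(\mathcal{C}_2))$. If $q=2^m$ for some $m$, or $\mathcal{C}_1$ is Hermitian self-orthogonal, then $$2\dim(\mathcal{C}_1\cap\mathcal{C}_2^{\perp_H})+l_2-k_1\le \dim(\mathrm{Hull}_H(\mathcal{C}))\le 2\dim(\mathcal{C}_1\cap\mathcal{C}_2^{\perp_H})+k_2-k_1;$$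 moreover, if in addition $\mathcal{C}_2$ is Hermitian self-orthogonal, then $\dim(\mathrm{Hull}_H(\mathcal{C}))=2\dim(\mathcal{C}_1\cap\mathcal{C}_2^{\perp_H})+k_2-k_1$.
   Context: An $[n,k,d]_q$ code is a $k$-dimensional subspace of $\mathbb{F}_q^n$ with minimum Hamming distance $d$. Euclidean inner product $(\mathbf{x},\mathbf{y})_E=\sum_i x_iy_i$; when $q=p^h$ with $h$ even, Hermitian inner product $(\mathbf{x},\mathbf{y})_H=\sum_i x_iy_i^{\sqrt q}$. $\mathcal{C}^{\perp_E},\mathcal{C}^{\perp_H}$ are the corresponding duals, $\mathrm{Hull}_E(\mathcal{C})=\mathcal{C}\cap\mathcal{C}^{\perp_E}$, $\mathrm{Hull}_H(\mathcal{C})=\mathcal{C}\cap\mathcal{C}^{\perp_H}$. A code is Euclidean (resp. Hermitian) self-orthogonal if $\mathcal{C}\subseteq\mathcal{C}^{\perp_E}$ (resp. $\mathcal{C}\subseteq\mathcal{C}^{\perp_H}$). *)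

theory Defs
  imports "Jordan_Normal_Form.VS_Connect"
begin

text \<open>Vectors of F_q^n are JNF vectors in carrier_vec n over a finite field 'a (q = CARD('a)).\<close>

definition linear_code :: "nat \<Rightarrow> 'a::field vec set \<Rightarrow> bool" where
  "linear_code n C \<longleftrightarrow> subspace (class_ring :: 'a ring) C (module_vec TYPE('a) n)"

definition code_dim :: "nat \<Rightarrow> 'a::field vec set \<Rightarrow> nat" where
  "code_dim n C = vectorspace.dim (class_ring :: 'a ring) ((module_vec TYPE('a) n)\<lparr>carrier := C\<rparr>)"

definition hamming_dist :: "'a::zero vec \<Rightarrow> 'a vec \<Rightarrow> nat" where
  "hamming_dist x y = card {i. i < dim_vec x \<and> x $ i \<noteq> y $ i}"

text \<open>d is the minimum Hamming distance of C (requires C to have two distinct codewords).\<close>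
definition min_distance :: "'a::zero vec set \<Rightarrow> nat \<Rightarrow> bool" where
  "min_distance C d \<longleftrightarrow>
     (\<exists>x\<in>C. \<exists>y\<in>C. x \<noteq> y \<and> hamming_dist x y = d) \<and>
     (\<forall>x\<in>C. \<forall>y\<in>C. x \<noteq> y \<longrightarrow> d \<le> hamming_dist x y)"

definition is_code :: "nat \<Rightarrow> nat \<Rightarrow> nat \<Rightarrow> 'a::field vec set \<Rightarrow> bool" where
  "is_code n k d C \<longleftrightarrow> linear_code n C \<and> code_dim n C = k \<and> min_distance C d"

definition is_gen_matrix :: "nat \<Rightarrow> nat \<Rightarrow> 'a::field mat \<Rightarrow> 'a vec set \<Rightarrow> bool" where
  "is_gen_matrix n k G C \<longleftrightarrow>
     G \<in> carrier_mat k n \<and> distinct (rows G) \<and>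
     \<not> LinearCombinations.module.lin_dep (class_ring :: 'a ring) (module_vec TYPE('a) n) (set (rows G)) \<and>
     LinearCombinations.module.span (class_ring :: 'a ring) (module_vec TYPE('a) n) (set (rows G)) = C"

definition dual_E :: "nat \<Rightarrow> 'a::field vec set \<Rightarrow> 'a vec set" where
  "dual_E n C = {x \<in> carrier_vec n. \<forall>y\<in>C. x \<bullet> y = 0}"

text \<open>Hermitian inner product with conjugation y \<mapsto> y^r, where r = sqrt q.\<close>
definition herm_prod :: "nat \<Rightarrow> 'a::field vec \<Rightarrow> 'a vec \<Rightarrow> 'a" where
  "herm_prod r x y = (\<Sum>i<dim_vec x. x $ i * (y $ i) ^ r)"

definition dual_H :: "nat \<Rightarrow> nat \<Rightarrow> 'a::field vec set \<Rightarrow> 'a vec set" where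
  "dual_H r n C = {x \<in> carrier_vec n. \<forall>y\<in>C. herm_prod r x y = 0}"

definition hull_E :: "nat \<Rightarrow> 'a::field vec set \<Rightarrow> 'a vec set" where
  "hull_E n C = C \<inter> dual_E n C"

definition hull_H :: "nat \<Rightarrow> nat \<Rightarrow> 'a::field vec set \<Rightarrow> 'a vec set" where
  "hull_H r n C = C \<inter> dual_H r n C"

definition self_orth_E :: "nat \<Rightarrow> 'a::field vec set \<Rightarrow> bool" where
  "self_orth_E n C \<longleftrightarrow> C \<subseteq> dual_E n C"

definition self_orth_H :: "nat \<Rightarrow> nat \<Rightarrow> 'a::field vec set \<Rightarrow> bool" where
  "self_orth_H r n C \<longleftrightarrow> C \<subseteq> dual_H r n C"

definition uuv :: "'a::field vec set \<Rightarrow> 'a vec set \<Rightarrow> 'a vec set" where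
  "uuv C1 C2 = {u @\<^sub>v (u + v) | u v. u \<in> C1 \<and> v \<in> C2}"

end

theory Submission
  imports Defs "Jordan_Normal_Form.Matrix_Kernel" "Jordan_Normal_Form.DL_Rank"
    "HOL-Computational_Algebra.Primes"
begin

lemma lc_iff:
  "linear_code n (C :: 'a::field vec set) \<longleftrightarrow>
    C \<subseteq> carrier_vec n \<and> 0\<^sub>v n \<in> C \<and> (\<forall>x\<in>C. \<forall>y\<in>C. x + y \<in> C) \<and> (\<forall>c. \<forall>x\<in>C. c \<cdot>\<^sub>v x \<in> C)"
proof
  assume "linear_code n C"
  then interpret subspace "class_ring :: 'a ring" C "module_vec TYPE('a) n"
    unfolding linear_code_def .
  show "C \<subseteq> carrier_vec n \<and> 0\<^sub>v n \<in> C \<and> (\<forall>x\<in>C. \<forall>y\<in>C. x + y \<in> C) \<and> (\<forall>c. \<forall>x\<in>C. c \<cdot>\<^sub>v x \<in> C)"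
    using submod unfolding submodule_def subgroup_def
    by (auto simp: module_vec_simps class_ring_simps)
next
  assume a: "C \<subseteq> carrier_vec n \<and> 0\<^sub>v n \<in> C \<and> (\<forall>x\<in>C. \<forall>y\<in>C. x + y \<in> C) \<and> (\<forall>c. \<forall>x\<in>C. c \<cdot>\<^sub>v x \<in> C)"
  interpret vec_space "TYPE('a)" n .
  have "submodule class_ring C (module_vec TYPE('a) n)"
    by (rule submodule.intro) (use a vec_module in \<open>auto simp: module_vec_simps class_ring_simps\<close>)
  then show "linear_code n C" unfolding linear_code_def
    by (simp add: subspace_def vec_vs)
qed


lemma lcD:
  assumes "linear_code n C"
  shows "C \<subseteq> carrier_vec n" "0\<^sub>v n \<in> C" "x \<in> C \<Longrightarrow> y \<in> C \<Longrightarrow> x + y \<in> C"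
    "x \<in> C \<Longrightarrow> c \<cdot>\<^sub>v x \<in> C"
proof -
  note h = lc_iff[THEN iffD1, OF assms]
  show "C \<subseteq> carrier_vec n" using h by (elim conjE)
  show "0\<^sub>v n \<in> C" using h by (elim conjE)
  show "x \<in> C \<Longrightarrow> y \<in> C \<Longrightarrow> x + y \<in> C" using h by (elim conjE) simp
  show "x \<in> C \<Longrightarrow> c \<cdot>\<^sub>v x \<in> C" using h by (elim conjE) simp
qed

lemma finite_carrier_vec: "finite (carrier_vec n :: 'a::finite vec set)"
proof -
  have "carrier_vec n \<subseteq> (\<lambda>f. vec n f) ` ({0..<n} \<rightarrow>\<^sub>E (UNIV :: 'a set))"
  proof
    fix v :: "'a vec" assume v: "v \<in> carrier_vec n"
    show "v \<in> (\<lambda>f. vec n f) ` ({0..<n} \<rightarrow>\<^sub>E UNIV)"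
    proof (rule image_eqI[where x="restrict (($) v) {0..<n}"])
      show "v = vec n (restrict (($) v) {0..<n})" using v by (intro eq_vecI) auto
    qed auto
  qed
  then show ?thesis by (rule finite_subset) (simp add: finite_PiE)
qed


lemma card_carrier_vec: "card (carrier_vec n :: 'a::finite vec set) = card (UNIV :: 'a set) ^ n"
proof -
  have "bij_betw (\<lambda>f. vec n f) ({0..<n} \<rightarrow>\<^sub>E (UNIV :: 'a set)) (carrier_vec n)"
  proof (rule bij_betwI[where g = "\<lambda>v. restrict (($) v) {0..<n}"])
    show "(\<lambda>f. vec n f) \<in> ({0..<n} \<rightarrow>\<^sub>E (UNIV :: 'a set)) \<rightarrow> carrier_vec n" by auto
    show "(\<lambda>v. restrict (($) v) {0..<n}) \<in> carrier_vec n \<rightarrow> ({0..<n} \<rightarrow>\<^sub>E (UNIV :: 'a set))" by auto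
    show "restrict (($) (vec n f)) {0..<n} = f" if "f \<in> {0..<n} \<rightarrow>\<^sub>E (UNIV :: 'a set)" for f
      using that by (auto simp: restrict_def PiE_def extensional_def fun_eq_iff)
    show "vec n (restrict (($) v) {0..<n}) = v" if "v \<in> carrier_vec n" for v :: "'a vec"
      using that by (intro eq_vecI) auto
  qed
  then have "card (carrier_vec n :: 'a vec set) = card ({0..<n} \<rightarrow>\<^sub>E (UNIV :: 'a set))"
    by (simp add: bij_betw_same_card)
  also have "\<dots> = card (UNIV :: 'a set) ^ n" by (simp add: card_PiE)
  finally show ?thesis .
qed

lemma card_code:
  fixes C :: "'a::{finite,field} vec set"
  assumes "linear_code n C"
  shows "card C = card (UNIV :: 'a set) ^ code_dim n C"
proof -
  interpret vec_space "TYPE('a)" n .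
  have sub: "subspace class_ring C V" using assms unfolding linear_code_def .
  interpret W: vectorspace class_ring "vs C" using subspace_is_vs[OF sub] .
  have Csub: "C \<subseteq> carrier_vec n" using lcD(1)[OF assms] .
  have finC: "finite C" using finite_subset[OF Csub finite_carrier_vec] .
  have s1: "W.span C \<subseteq> carrier (vs C)" by (rule W.span_is_subset2) simp
  have s2: "C \<subseteq> W.span C" by (rule W.in_own_span) simp
  have "W.fin_dim" unfolding W.fin_dim_def
  proof (intro exI[of _ C] conjI)
    show "W.gen_set C" using s1 s2 by simp
  qed (use finC in simp_all)
  then obtain \<beta> where fb: "finite \<beta>" "W.basis \<beta>" using W.finite_basis_exists by blast
  have bC: "\<beta> \<subseteq> carrier (vs C)" using fb(2) unfolding W.basis_def by blast
  have dim: "W.dim = card \<beta>" using W.dim_basis[OF fb] .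
  from W.basis_criterion[OF fb(1) bC] fb(2)
  have crit: "\<forall>v. v \<in> carrier (vs C) \<longrightarrow> (\<exists>!a. a \<in> \<beta> \<rightarrow>\<^sub>E carrier class_ring \<and> W.lincomb a \<beta> = v)"
    by blast
  have cr: "carrier (class_ring :: 'a ring) = UNIV" by (simp add: class_ring_simps)
  have lc: "W.lincomb a \<beta> \<in> C" if "a \<in> \<beta> \<rightarrow>\<^sub>E (UNIV :: 'a set)" for a
  proof -
    have "a \<in> \<beta> \<rightarrow> carrier class_ring" using that cr by auto
    from W.lincomb_closed[OF bC this] show ?thesis by simp
  qed
  have "bij_betw (\<lambda>a. W.lincomb a \<beta>) (\<beta> \<rightarrow>\<^sub>E (UNIV :: 'a set)) C"
    unfolding bij_betw_def
  proof
    show "inj_on (\<lambda>a. W.lincomb a \<beta>) (\<beta> \<rightarrow>\<^sub>E UNIV)"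
    proof (rule inj_onI)
      fix a b assume a: "a \<in> \<beta> \<rightarrow>\<^sub>E (UNIV :: 'a set)" and b: "b \<in> \<beta> \<rightarrow>\<^sub>E (UNIV :: 'a set)"
        and e: "W.lincomb a \<beta> = W.lincomb b \<beta>"
      have "W.lincomb a \<beta> \<in> carrier (vs C)" using lc[OF a] by simp
      then have "\<exists>!c. c \<in> \<beta> \<rightarrow>\<^sub>E carrier class_ring \<and> W.lincomb c \<beta> = W.lincomb a \<beta>"
        using crit by blast
      moreover have "a \<in> \<beta> \<rightarrow>\<^sub>E carrier class_ring" "b \<in> \<beta> \<rightarrow>\<^sub>E carrier class_ring"
        using a b cr by auto
      ultimately show "a = b" using e by metis
    qed
    show "(\<lambda>a. W.lincomb a \<beta>) ` (\<beta> \<rightarrow>\<^sub>E UNIV) = C"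
    proof
      show "(\<lambda>a. W.lincomb a \<beta>) ` (\<beta> \<rightarrow>\<^sub>E UNIV) \<subseteq> C" using lc by blast
      show "C \<subseteq> (\<lambda>a. W.lincomb a \<beta>) ` (\<beta> \<rightarrow>\<^sub>E UNIV)"
      proof
        fix v assume "v \<in> C"
        then have "v \<in> carrier (vs C)" by simp
        then obtain a where "a \<in> \<beta> \<rightarrow>\<^sub>E carrier class_ring" "W.lincomb a \<beta> = v"
          using crit by blast
        then show "v \<in> (\<lambda>a. W.lincomb a \<beta>) ` (\<beta> \<rightarrow>\<^sub>E UNIV)" using cr by force
      qed
    qed
  qed
  then have "card C = card (\<beta> \<rightarrow>\<^sub>E (UNIV :: 'a set))" by (simp add: bij_betw_same_card)
  also have "\<dots> = card (UNIV :: 'a set) ^ card \<beta>" using fb(1) by (simp add: card_PiE)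
  finally show ?thesis unfolding code_dim_def dim by simp
qed

lemma code_basis:
  fixes C :: "'a::{finite,field} vec set"
  assumes "linear_code n C"
  obtains \<beta> where "finite \<beta>" "\<beta> \<subseteq> C"
    "\<not> LinearCombinations.module.lin_dep (class_ring :: 'a ring) (module_vec TYPE('a) n) \<beta>"
    "LinearCombinations.module.span (class_ring :: 'a ring) (module_vec TYPE('a) n) \<beta> = C"
    "card \<beta> = code_dim n C"
proof -
  interpret vec_space "TYPE('a)" n .
  have sub: "subspace class_ring C V" using assms unfolding linear_code_def .
  have smod: "submodule class_ring C V" using sub by simp
  interpret W: vectorspace class_ring "vs C" using subspace_is_vs[OF sub] .
  have Csub: "C \<subseteq> carrier_vec n" using lcD(1)[OF assms] .
  have finC: "finite C" using finite_subset[OF Csub finite_carrier_vec] .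
  have s1: "W.span C \<subseteq> carrier (vs C)" by (rule W.span_is_subset2) simp
  have s2: "C \<subseteq> W.span C" by (rule W.in_own_span) simp
  have "W.fin_dim" unfolding W.fin_dim_def
  proof (intro exI[of _ C] conjI)
    show "W.gen_set C" using s1 s2 by simp
  qed (use finC in simp_all)
  then obtain \<beta> where fb: "finite \<beta>" "W.basis \<beta>" using W.finite_basis_exists by blast
  have bC: "\<beta> \<subseteq> C" using fb(2) unfolding W.basis_def by simp
  have dim: "W.dim = card \<beta>" using W.dim_basis[OF fb] .
  note nd = span_li_not_depend[OF bC smod]
  show ?thesis
  proof (rule that[OF fb(1) bC])
    show "\<not> lin_dep \<beta>" using fb(2) nd(2) unfolding W.basis_def by simp
    show "span \<beta> = C" using fb(2) nd(1) unfolding W.basis_def by simp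
    show "card \<beta> = code_dim n C" unfolding code_dim_def dim[symmetric] by simp
  qed
qed

lemma lc_dual_E:
  fixes C :: "'a::field vec set"
  assumes "C \<subseteq> carrier_vec n"
  shows "linear_code n (dual_E n C)"
  unfolding lc_iff
proof (intro conjI ballI allI)
  show "dual_E n C \<subseteq> carrier_vec n" unfolding dual_E_def by auto
  show "0\<^sub>v n \<in> dual_E n C" unfolding dual_E_def using assms by auto
  fix x y assume x: "x \<in> dual_E n C" and y: "y \<in> dual_E n C"
  show "x + y \<in> dual_E n C" using x y assms unfolding dual_E_def
    by (auto simp: add_scalar_prod_distrib[of _ n])
next
  fix c x assume x: "x \<in> dual_E n C"
  show "c \<cdot>\<^sub>v x \<in> dual_E n C" using x assms unfolding dual_E_def
    by auto
qed

lemma dual_E_card: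
  fixes C :: "'a::{finite,field} vec set"
  assumes lc: "linear_code n C"
  shows "card (dual_E n C) * card C = card (UNIV :: 'a set) ^ n"
proof -
  interpret vec_space "TYPE('a)" n .
  obtain \<beta> where b: "finite \<beta>" "\<beta> \<subseteq> C" "\<not> lin_dep \<beta>" "span \<beta> = C" "card \<beta> = code_dim n C"
    using code_basis[OF lc] by blast
  obtain bs where bs: "set bs = \<beta>" "distinct bs" using finite_distinct_list[OF b(1)] by blast
  define k where "k = length bs"
  have kc: "k = code_dim n C" unfolding k_def using b(5) bs distinct_card by metis
  have Csub: "C \<subseteq> carrier_vec n" using lcD(1)[OF lc] .
  have bsc: "set bs \<subseteq> carrier_vec n" using bs(1) b(2) Csub by auto
  define M where "M = mat_of_rows n bs"
  have Mc: "M \<in> carrier_mat k n" unfolding M_def k_def by simp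
  have rowM: "row M j = bs ! j" if "j < k" for j
    unfolding M_def using that bsc unfolding k_def by (intro mat_of_rows_row) auto
  have dual: "dual_E n C = mat_kernel M"
  proof -
    have "dual_E n C = orthogonal_complement C" unfolding dual_E_def orthogonal_complement_def by auto
    also have "\<dots> = orthogonal_complement \<beta>" using b(4) in_orthogonal_complement_span[of \<beta>] bsc bs(1) by auto
    also have "\<dots> = mat_kernel M"
    proof (rule Set.set_eqI, rule iffI)
      fix x assume x: "x \<in> orthogonal_complement \<beta>"
      then have xc: "x \<in> carrier_vec n" unfolding orthogonal_complement_def by auto
      have "M *\<^sub>v x = 0\<^sub>v k"
      proof (rule eq_vecI)
        fix j assume "j < dim_vec (0\<^sub>v k :: 'a vec)"
        then have j: "j < k" by simp
        have "bs ! j \<in> \<beta>" using j bs(1) unfolding k_def by auto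
        then have "x \<bullet> bs ! j = 0" using x unfolding orthogonal_complement_def by auto
        moreover have "bs ! j \<in> carrier_vec n" using \<open>bs ! j \<in> \<beta>\<close> bsc bs(1) by auto
        ultimately have "bs ! j \<bullet> x = 0" using comm_scalar_prod[OF xc] by metis
        then show "(M *\<^sub>v x) $ j = 0\<^sub>v k $ j" using j Mc rowM by simp
      qed (use Mc in simp)
      then show "x \<in> mat_kernel M" using Mc xc by (intro mat_kernelI) auto
    next
      fix x assume x: "x \<in> mat_kernel M"
      have xc: "x \<in> carrier_vec n" and Mx: "M *\<^sub>v x = 0\<^sub>v k" using mat_kernelD[OF Mc x] by auto
      show "x \<in> orthogonal_complement \<beta>" unfolding orthogonal_complement_def
      proof (intro CollectI conjI ballI xc)
        fix y assume "y \<in> \<beta>"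
        then obtain j where j: "j < k" "y = bs ! j" using bs(1) unfolding k_def by (metis in_set_conv_nth)
        have yc: "y \<in> carrier_vec n" using \<open>y \<in> \<beta>\<close> bsc bs(1) by auto
        have "(M *\<^sub>v x) $ j = 0" using Mx j by simp
        then have "y \<bullet> x = 0" using j Mc rowM by simp
        then show "x \<bullet> y = 0" using comm_scalar_prod[OF xc yc] by simp
      qed
    qed
    finally show ?thesis .
  qed
  have kd: "kernel_dim M = code_dim n (mat_kernel M)"
    using Mc unfolding kernel_dim_def code_dim_def by simp
  define R where "R = gauss_jordan_single M"
  note gj = gauss_jordan_single[OF Mc R_def[symmetric]]
  obtain P Q where PQ: "R = P * M" "P \<in> carrier_mat k k" "Q \<in> carrier_mat k k" "P * Q = 1\<^sub>m k"
    using gj(4) by blast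
  obtain f where pf: "pivot_fun R f n" using gj(3) gj(2) unfolding row_echelon_form_def by auto
  have rows_nz: "row R i \<noteq> 0\<^sub>v n" if i: "i < k" for i
  proof
    assume z: "row R i = 0\<^sub>v n"
    have Pi: "row P i \<in> carrier_vec k" using PQ(2) i by auto
    have "row P i \<noteq> 0\<^sub>v k"
    proof
      assume "row P i = 0\<^sub>v k"
      moreover have "(P * Q) $$ (i, i) = row P i \<bullet> col Q i" using PQ(2,3) i by simp
      moreover have "col Q i \<in> carrier_vec k" using PQ(3) i by simp
      ultimately have "(P * Q) $$ (i, i) = 0" by simp
      then show False using PQ(4) i by simp
    qed
    have Mt: "M\<^sup>T \<in> carrier_mat n k" using Mc by simp
    have "M\<^sup>T *\<^sub>v row P i = row R i"
    proof (rule eq_vecI)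
      fix j assume "j < dim_vec (row R i)"
      then have j: "j < n" using gj(2) by simp
      have "(M\<^sup>T *\<^sub>v row P i) $ j = col M j \<bullet> row P i" using j Mc by simp
      also have "\<dots> = row P i \<bullet> col M j" using comm_scalar_prod[of "col M j" k "row P i"] Mc Pi j by simp
      also have "\<dots> = row R i $ j" using PQ(1,2) Mc i j by simp
      finally show "(M\<^sup>T *\<^sub>v row P i) $ j = row R i $ j" .
    qed (use Mc gj(2) in simp)
    then have "M\<^sup>T *\<^sub>v row P i = 0\<^sub>v n" using z by simp
    moreover have "distinct (cols M\<^sup>T)" using bs(2) bsc unfolding M_def by simp
    ultimately have "lin_dep (set (cols M\<^sup>T))"
      using lin_depI[OF Mt Pi \<open>row P i \<noteq> 0\<^sub>v k\<close>] by blast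
    moreover have "set (cols M\<^sup>T) = \<beta>" using bs(1) bsc unfolding M_def by simp
    ultimately show False using b(3) by simp
  qed
  have "length (pivot_positions R) = card {i. i < k \<and> row R i \<noteq> 0\<^sub>v n}"
    using pivot_positions(4)[OF gj(2) pf] .
  also have "{i. i < k \<and> row R i \<noteq> 0\<^sub>v n} = {..<k}" using rows_nz by auto
  finally have lp: "length (pivot_positions R) = k" by simp
  have kd2: "kernel_dim M = n - k" using kernel_dim_code[of M] lp Mc unfolding R_def by simp
  have "card \<beta> \<le> dim" using li_le_dim(2)[OF fin_dim _ b(3)] bsc bs(1) by simp
  then have kn: "k \<le> n" using kc b(5) dim_is_n by simp
  have "card (dual_E n C) = card (UNIV :: 'a set) ^ (n - k)"
    using card_code[OF lc_dual_E[OF Csub]] dual kd kd2 by simp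
  moreover have "card C = card (UNIV :: 'a set) ^ k" using card_code[OF lc] kc by simp
  ultimately show ?thesis using kn by (simp add: power_add[symmetric])
qed

lemma ff_power_card:
  fixes x :: "'a :: {finite,field}"
  shows "x ^ card (UNIV :: 'a set) = x"
proof (cases "x = 0")
  case False
  have "x * (\<Prod>y\<in>UNIV-{0}. x * y) = x * x ^ (card (UNIV :: 'a set) - 1) * \<Prod>(UNIV-{0})"
    by (simp add: prod.distrib mult_ac)
  also have "x * x ^ (card (UNIV :: 'a set) - 1) = x ^ Suc (card (UNIV :: 'a set) - 1)"
    by (subst power_Suc) auto
  also have "Suc (card (UNIV :: 'a set) - 1) = card (UNIV :: 'a set)"
    using finite_UNIV_card_ge_0[where ?'a = 'a] by simp
  also have "(\<Prod>y\<in>UNIV-{0}. x * y) = (\<Prod>y\<in>UNIV-{0}. y)"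
    by (rule prod.reindex_bij_witness[of _ "\<lambda>y. y / x" "\<lambda>y. x * y"]) (use False in auto)
  finally show ?thesis
    by simp
qed (use finite_UNIV_card_ge_0[where ?'a = 'a] in auto)

lemma of_nat_card_zero: "of_nat (card (UNIV :: 'a :: {finite,field} set)) = (0 :: 'a)"
proof -
  have "(\<Sum>y\<in>UNIV. 1 + y) = (\<Sum>y\<in>(UNIV :: 'a set). y)"
    by (rule sum.reindex_bij_witness[of _ "\<lambda>y. y - 1" "\<lambda>y. 1 + y"]) auto
  then show ?thesis by (simp add: sum.distrib)
qed

lemma CHAR_card:
  assumes "prime (p::nat)" "card (UNIV :: 'a :: {finite,field} set) = p ^ h"
  shows "CHAR('a) = p"
proof -
  have pos: "CHAR('a) > 0" using finite_imp_CHAR_pos[where ?'a='a] by simp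
  have pr: "prime CHAR('a)" using prime_CHAR_semidom[OF pos] .
  have "CHAR('a) dvd card (UNIV :: 'a set)" using of_nat_card_zero[where ?'a='a]
    of_nat_eq_0_iff_char_dvd by blast
  then have "CHAR('a) dvd p" using assms(2) pr prime_dvd_power by metis
  then show ?thesis using pr assms(1) primes_dvd_imp_eq by blast
qed

lemma card_ge2: "card (UNIV :: 'a :: {finite,field} set) \<ge> 2"
proof -
  have "card {0, 1::'a} \<le> card (UNIV :: 'a set)" by (rule card_mono) auto
  then show ?thesis by simp
qed

lemma char2_double:
  assumes "card (UNIV :: 'a :: {finite,field} set) = 2 ^ m"
  shows "(x::'a) + x = 0"
proof -
  have m: "m > 0" using assms card_ge2[where ?'a = 'a]
    by (cases m) auto
  have "CHAR('a) = 2" using CHAR_card[OF _ assms] by simp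
  then have "(of_nat 2 :: 'a) = 0" by (metis of_nat_CHAR)
  then have "(2::'a) = 0" by simp
  then show ?thesis by (metis mult_2 mult_zero_left)
qed

definition conj_ok :: "('a::field \<Rightarrow> 'a) \<Rightarrow> bool" where
  "conj_ok \<tau> \<longleftrightarrow> (\<forall>x y. \<tau> (x + y) = \<tau> x + \<tau> y) \<and> (\<forall>x y. \<tau> (x * y) = \<tau> x * \<tau> y) \<and> (\<forall>x. \<tau> (\<tau> x) = x)"

lemma conj_ok_id: "conj_ok (\<lambda>x. x)" unfolding conj_ok_def by simp

lemma conj_ok_frob:
  fixes p h :: nat
  assumes "prime p" "even h" "card (UNIV :: 'a :: {finite,field} set) = p ^ h"
  shows "conj_ok (\<lambda>x::'a. x ^ (p ^ (h div 2)))"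
proof -
  have ch: "CHAR('a) = p" using CHAR_card[OF assms(1,3)] .
  have add: "(x + y) ^ (p ^ (h div 2)) = x ^ (p ^ (h div 2)) + y ^ (p ^ (h div 2))" for x y :: 'a
    by (rule freshmans_dream') (use ch assms(1) in auto)
  have inv: "(x ^ (p ^ (h div 2))) ^ (p ^ (h div 2)) = x" for x :: 'a
  proof -
    have "p ^ (h div 2) * p ^ (h div 2) = p ^ h" using assms(2)
      by (metis dvd_mult_div_cancel mult_2 power_add)
    then show ?thesis using ff_power_card[of x] assms(3) by (simp add: power_mult[symmetric])
  qed
  show ?thesis unfolding conj_ok_def using add inv by (simp add: power_mult_distrib)
qed

definition sform :: "('a::field \<Rightarrow> 'a) \<Rightarrow> 'a vec \<Rightarrow> 'a vec \<Rightarrow> 'a" where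
  "sform \<tau> x y = (\<Sum>i<dim_vec x. x $ i * \<tau> (y $ i))"

definition dualg :: "('a::field \<Rightarrow> 'a) \<Rightarrow> nat \<Rightarrow> 'a vec set \<Rightarrow> 'a vec set" where
  "dualg \<tau> n C = {x \<in> carrier_vec n. \<forall>y\<in>C. sform \<tau> x y = 0}"

definition ssum :: "'a::field vec set \<Rightarrow> 'a vec set \<Rightarrow> 'a vec set" where
  "ssum X Y = {x + y | x y. x \<in> X \<and> y \<in> Y}"

context
  fixes \<tau> :: "'a::field \<Rightarrow> 'a"
  assumes co: "conj_ok \<tau>"
begin

lemma co_add: "\<tau> (x + y) = \<tau> x + \<tau> y" using co unfolding conj_ok_def by blast
lemma co_mult: "\<tau> (x * y) = \<tau> x * \<tau> y" using co unfolding conj_ok_def by blast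
lemma co_inv: "\<tau> (\<tau> x) = x" using co unfolding conj_ok_def by blast
lemma co_0: "\<tau> 0 = 0"
proof -
  have "\<tau> (0 + 0) = \<tau> 0 + \<tau> 0" by (rule co_add)
  then have "\<tau> 0 = \<tau> 0 + \<tau> 0" by (simp only: add_0_right)
  then show ?thesis by (metis add_cancel_left_right)
qed
lemma co_inj: "\<tau> x = \<tau> y \<Longrightarrow> x = y" by (metis co_inv)
lemma co_sum: "\<tau> (sum g A) = (\<Sum>i\<in>A. \<tau> (g i))"
  by (induct A rule: infinite_finite_induct) (auto simp: co_0 co_add)

lemma sform_sym:
  assumes "x \<in> carrier_vec n" "y \<in> carrier_vec n"
  shows "sform \<tau> y x = \<tau> (sform \<tau> x y)"
  using assms unfolding sform_def by (simp add: co_sum co_mult co_inv mult.commute)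

lemma sform_add_right:
  assumes "x \<in> carrier_vec n" "y \<in> carrier_vec n" "z \<in> carrier_vec n"
  shows "sform \<tau> x (y + z) = sform \<tau> x y + sform \<tau> x z"
  using assms unfolding sform_def by (simp add: co_add distrib_left sum.distrib)

lemma sform_smult_right:
  assumes "x \<in> carrier_vec n" "y \<in> carrier_vec n"
  shows "sform \<tau> x (c \<cdot>\<^sub>v y) = \<tau> c * sform \<tau> x y"
  using assms unfolding sform_def by (simp add: co_mult sum_distrib_left mult_ac)

lemma sform_E:
  assumes "x \<in> carrier_vec n" "y \<in> carrier_vec n"
  shows "sform \<tau> x y = x \<bullet> map_vec \<tau> y"
  using assms unfolding sform_def scalar_prod_def by (simp add: lessThan_atLeast0)

end

lemma sform_add_left:
  assumes "x \<in> carrier_vec n" "y \<in> carrier_vec n" "z \<in> carrier_vec n"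
  shows "sform \<tau> (x + y) z = sform \<tau> x z + sform \<tau> y z"
  using assms unfolding sform_def by (simp add: distrib_right sum.distrib)

lemma sform_smult_left:
  assumes "x \<in> carrier_vec n"
  shows "sform \<tau> (c \<cdot>\<^sub>v x) y = c * sform \<tau> x y"
  using assms unfolding sform_def by (simp add: sum_distrib_left mult_ac)

lemma sform_zero_left: "sform \<tau> (0\<^sub>v n) y = 0"
  unfolding sform_def by simp

lemma sum_split_nn: "(\<Sum>i<n+m. g i) = (\<Sum>i<n. g i) + (\<Sum>i<m. g (n + i))" for n m :: nat
  by (induct m) (auto simp: add.assoc)

lemma sform_append:
  assumes "u \<in> carrier_vec n" "w \<in> carrier_vec m" "u' \<in> carrier_vec n" "w' \<in> carrier_vec m"
  shows "sform \<tau> (u @\<^sub>v w) (u' @\<^sub>v w') = sform \<tau> u u' + sform \<tau> w w'"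
proof -
  have "sform \<tau> (u @\<^sub>v w) (u' @\<^sub>v w') = (\<Sum>i<n+m. (u @\<^sub>v w) $ i * \<tau> ((u' @\<^sub>v w') $ i))"
    using assms unfolding sform_def by simp
  also have "\<dots> = (\<Sum>i<n. (u @\<^sub>v w) $ i * \<tau> ((u' @\<^sub>v w') $ i)) + (\<Sum>i<m. (u @\<^sub>v w) $ (n+i) * \<tau> ((u' @\<^sub>v w') $ (n+i)))"
    by (rule sum_split_nn)
  also have "(\<Sum>i<n. (u @\<^sub>v w) $ i * \<tau> ((u' @\<^sub>v w') $ i)) = sform \<tau> u u'"
    using assms unfolding sform_def by (intro sum.cong) auto
  also have "(\<Sum>i<m. (u @\<^sub>v w) $ (n+i) * \<tau> ((u' @\<^sub>v w') $ (n+i))) = sform \<tau> w w'"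
    using assms unfolding sform_def by (intro sum.cong) auto
  finally show ?thesis .
qed

lemma dual_E_eq:
  assumes "C \<subseteq> carrier_vec n"
  shows "dual_E n C = dualg (\<lambda>x. x) n C"
proof -
  have "x \<bullet> y = sform (\<lambda>x. x) x y" if "x \<in> carrier_vec n" "y \<in> carrier_vec n" for x y :: "'a vec"
    using that unfolding sform_def scalar_prod_def by (simp add: lessThan_atLeast0)
  then have eq': "\<And>x y. x \<in> carrier_vec n \<Longrightarrow> y \<in> C \<Longrightarrow> x \<bullet> y = sform (\<lambda>x. x) x y"
    using assms by blast
  show ?thesis unfolding dual_E_def dualg_def using eq' by auto
qed

lemma dual_H_eq: "dual_H r n C = dualg (\<lambda>y. y ^ r) n C"
  unfolding dual_H_def dualg_def herm_prod_def sform_def by simp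

lemma hull_E_eq:
  assumes "C \<subseteq> carrier_vec n"
  shows "hull_E n C = C \<inter> dualg (\<lambda>x. x) n C"
  unfolding hull_E_def dual_E_eq[OF assms] ..

lemma hull_H_eq: "hull_H r n C = C \<inter> dualg (\<lambda>y. y ^ r) n C"
  unfolding hull_H_def dual_H_eq ..

lemma card_fibers:
  assumes "finite S" "\<And>y. y \<in> f ` S \<Longrightarrow> card {x\<in>S. f x = y} = m"
  shows "card S = card (f ` S) * m"
proof -
  have "card (\<Union>y\<in>f`S. {x\<in>S. f x = y}) = (\<Sum>y\<in>f`S. card {x\<in>S. f x = y})"
    by (rule card_UN_disjoint) (use assms(1) in auto)
  moreover have "(\<Union>y\<in>f`S. {x\<in>S. f x = y}) = S" by auto
  ultimately show ?thesis using assms(2) by simp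
qed

lemma lc_diff:
  assumes "linear_code n C" "x \<in> C" "y \<in> C"
  shows "x - y \<in> C"
proof -
  have "(-1) \<cdot>\<^sub>v y \<in> C" using lcD(4)[OF assms(1) assms(3)] .
  then have "x + (-1) \<cdot>\<^sub>v y \<in> C" using lcD(3)[OF assms(1) assms(2)] by blast
  moreover have "x + (-1) \<cdot>\<^sub>v y = x - y"
    using lcD(1)[OF assms(1)] assms(2,3) by (intro eq_vecI) auto
  ultimately show ?thesis by simp
qed

lemma lc_inter:
  assumes "linear_code n X" "linear_code n Y"
  shows "linear_code n (X \<inter> Y)"
  unfolding lc_iff using lcD[OF assms(1)] lcD[OF assms(2)] by auto

lemma ssum_sub:
  assumes "linear_code n X" "linear_code n Y"
  shows "ssum X Y \<subseteq> carrier_vec n"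
  unfolding ssum_def using lcD(1)[OF assms(1)] lcD(1)[OF assms(2)] by (auto intro!: add_carrier_vec)

lemma lc_ssum:
  assumes X: "linear_code n X" and Y: "linear_code n Y"
  shows "linear_code n (ssum X Y)"
  unfolding lc_iff
proof (intro conjI ballI allI)
  note cx = lcD(1)[OF X] and cy = lcD(1)[OF Y]
  show "ssum X Y \<subseteq> carrier_vec n" by (rule ssum_sub[OF X Y])
  have "0\<^sub>v n = 0\<^sub>v n + (0\<^sub>v n :: 'a vec)" by (intro eq_vecI) auto
  then show "0\<^sub>v n \<in> ssum X Y" unfolding ssum_def using lcD(2)[OF X] lcD(2)[OF Y] by blast
  fix a b assume a: "a \<in> ssum X Y" and b: "b \<in> ssum X Y"
  then obtain x y x' y' where e: "a = x + y" "b = x' + y'" "x \<in> X" "y \<in> Y" "x' \<in> X" "y' \<in> Y"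
    unfolding ssum_def by blast
  have c: "x \<in> carrier_vec n" "y \<in> carrier_vec n" "x' \<in> carrier_vec n" "y' \<in> carrier_vec n"
    using e(3-6) cx cy by auto
  have "a + b = (x + x') + (y + y')"
    unfolding e using c by (intro eq_vecI) (auto simp: algebra_simps)
  moreover have "x + x' \<in> X" "y + y' \<in> Y" using lcD(3)[OF X] lcD(3)[OF Y] e by auto
  ultimately show "a + b \<in> ssum X Y" unfolding ssum_def by blast
next
  note cx = lcD(1)[OF X] and cy = lcD(1)[OF Y]
  fix c a assume a: "a \<in> ssum X Y"
  then obtain x y where e: "a = x + y" "x \<in> X" "y \<in> Y" unfolding ssum_def by blast
  have cc: "x \<in> carrier_vec n" "y \<in> carrier_vec n" using e(2-3) cx cy by auto
  have "c \<cdot>\<^sub>v a = c \<cdot>\<^sub>v x + c \<cdot>\<^sub>v y"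
    unfolding e using cc by (intro eq_vecI) (auto simp: algebra_simps)
  moreover have "c \<cdot>\<^sub>v x \<in> X" "c \<cdot>\<^sub>v y \<in> Y" using lcD(4)[OF X] lcD(4)[OF Y] e by auto
  ultimately show "c \<cdot>\<^sub>v a \<in> ssum X Y" unfolding ssum_def by blast
qed

lemma card_ssum:
  fixes X Y :: "'a::{finite,field} vec set"
  assumes X: "linear_code n X" and Y: "linear_code n Y"
  shows "card (ssum X Y) * card (X \<inter> Y) = card X * card Y"
proof -
  note cx = lcD(1)[OF X] and cy = lcD(1)[OF Y]
  have fX: "finite X" using finite_subset[OF cx finite_carrier_vec] .
  have fY: "finite Y" using finite_subset[OF cy finite_carrier_vec] .
  define f where "f = (\<lambda>p :: 'a vec \<times> 'a vec. fst p + snd p)"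
  have img: "f ` (X \<times> Y) = ssum X Y" unfolding f_def ssum_def by force
  have fib: "card {p \<in> X \<times> Y. f p = z} = card (X \<inter> Y)" if z: "z \<in> f ` (X \<times> Y)" for z
  proof -
    obtain x0 y0 where p0: "x0 \<in> X" "y0 \<in> Y" "z = x0 + y0" using z unfolding f_def by auto
    have c0: "x0 \<in> carrier_vec n" "y0 \<in> carrier_vec n" using p0 cx cy by auto
    have "bij_betw (\<lambda>w. (x0 + w, y0 - w)) (X \<inter> Y) {p \<in> X \<times> Y. f p = z}"
    proof (rule bij_betwI[where g = "\<lambda>p. fst p - x0"])
      show "(\<lambda>w. (x0 + w, y0 - w)) \<in> X \<inter> Y \<rightarrow> {p \<in> X \<times> Y. f p = z}"
      proof
        fix w assume w: "w \<in> X \<inter> Y"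
        have cw: "w \<in> carrier_vec n" using w cx by auto
        have "x0 + w \<in> X" using lcD(3)[OF X] p0 w by auto
        moreover have "y0 - w \<in> Y" using lc_diff[OF Y] p0 w by auto
        moreover have "(x0 + w) + (y0 - w) = z"
          unfolding p0 using c0 cw by (intro eq_vecI) auto
        ultimately show "(x0 + w, y0 - w) \<in> {p \<in> X \<times> Y. f p = z}" unfolding f_def by auto
      qed
      show "(\<lambda>p. fst p - x0) \<in> {p \<in> X \<times> Y. f p = z} \<rightarrow> X \<inter> Y"
      proof
        fix p assume p: "p \<in> {p \<in> X \<times> Y. f p = z}"
        then obtain x y where pe: "p = (x, y)" "x \<in> X" "y \<in> Y" "x + y = z" unfolding f_def by auto
        have cxy: "x \<in> carrier_vec n" "y \<in> carrier_vec n" using pe cx cy by auto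
        have "x - x0 \<in> X" using lc_diff[OF X] pe p0 by auto
        moreover have "x - x0 = y0 - y"
        proof (rule eq_vecI)
          fix i assume "i < dim_vec (y0 - y)"
          then have i: "i < n" using cxy c0 by auto
          have "(x + y) $ i = (x0 + y0) $ i" using pe p0 by simp
          then have "x $ i + y $ i = x0 $ i + y0 $ i" using i cxy c0 by auto
          then show "(x - x0) $ i = (y0 - y) $ i" using i cxy c0 by (auto simp: algebra_simps)
        qed (use cxy c0 in auto)
        ultimately show "fst p - x0 \<in> X \<inter> Y" using lc_diff[OF Y] pe p0 by auto
      qed
      show "fst (x0 + w, y0 - w) - x0 = w" if "w \<in> X \<inter> Y" for w
        using that c0 cx by (intro eq_vecI) auto
      show "(x0 + (fst p - x0), y0 - (fst p - x0)) = p" if pp: "p \<in> {p \<in> X \<times> Y. f p = z}" for p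
      proof -
        obtain x y where pe: "p = (x, y)" "x \<in> X" "y \<in> Y" "x + y = z" using pp unfolding f_def by auto
        have cxy: "x \<in> carrier_vec n" "y \<in> carrier_vec n" using pe cx cy by auto
        have "x0 + (x - x0) = x" using cxy c0 by (intro eq_vecI) auto
        moreover have "y0 - (x - x0) = y"
        proof (rule eq_vecI)
          fix i assume "i < dim_vec y"
          then have i: "i < n" using cxy by auto
          have "(x + y) $ i = (x0 + y0) $ i" using pe p0 by simp
          then have "x $ i + y $ i = x0 $ i + y0 $ i" using i cxy c0 by auto
          then show "(y0 - (x - x0)) $ i = y $ i" using i cxy c0 by (auto simp: algebra_simps)
        qed (use cxy c0 in auto)
        ultimately show ?thesis using pe by simp
      qed
    qed
    then show ?thesis by (simp add: bij_betw_same_card[symmetric])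
  qed
  have "card (X \<times> Y) = card (f ` (X \<times> Y)) * card (X \<inter> Y)"
    by (rule card_fibers) (use fX fY fib in auto)
  then show ?thesis using img fX fY by (simp add: card_cartesian_product)
qed

context
  fixes \<tau> :: "'a::{finite,field} \<Rightarrow> 'a"
  assumes co: "conj_ok \<tau>"
begin

lemma lc_map:
  assumes lc: "linear_code n C"
  shows "linear_code n (map_vec \<tau> ` C)"
  unfolding lc_iff
proof (intro conjI ballI allI)
  note cC = lcD(1)[OF lc]
  show "map_vec \<tau> ` C \<subseteq> carrier_vec n" using cC by auto
  have "map_vec \<tau> (0\<^sub>v n) = 0\<^sub>v n" by (intro eq_vecI) (auto simp: co_0[OF co])
  then show "0\<^sub>v n \<in> map_vec \<tau> ` C" using lcD(2)[OF lc] by (metis image_eqI)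
  fix a b assume a: "a \<in> map_vec \<tau> ` C" and b: "b \<in> map_vec \<tau> ` C"
  then obtain x y where e: "a = map_vec \<tau> x" "b = map_vec \<tau> y" "x \<in> C" "y \<in> C" by blast
  have c: "x \<in> carrier_vec n" "y \<in> carrier_vec n" using e cC by auto
  have "a + b = map_vec \<tau> (x + y)" unfolding e using c by (intro eq_vecI) (auto simp: co_add[OF co])
  moreover have "x + y \<in> C" using lcD(3)[OF lc e(3,4)] .
  ultimately show "a + b \<in> map_vec \<tau> ` C" by blast
next
  note cC = lcD(1)[OF lc]
  fix c a assume a: "a \<in> map_vec \<tau> ` C"
  then obtain x where e: "a = map_vec \<tau> x" "x \<in> C" by blast
  have cx: "x \<in> carrier_vec n" using e cC by auto
  have "c \<cdot>\<^sub>v a = map_vec \<tau> (\<tau> c \<cdot>\<^sub>v x)" unfolding e using cx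
    by (intro eq_vecI) (auto simp: co_mult[OF co] co_inv[OF co])
  moreover have "\<tau> c \<cdot>\<^sub>v x \<in> C" using lcD(4)[OF lc e(2)] .
  ultimately show "c \<cdot>\<^sub>v a \<in> map_vec \<tau> ` C" by blast
qed

lemma card_map:
  assumes "C \<subseteq> carrier_vec n"
  shows "card (map_vec \<tau> ` C) = card C"
proof (rule card_image, rule inj_onI)
  fix x y assume xy: "x \<in> C" "y \<in> C" "map_vec \<tau> x = map_vec \<tau> y"
  have c: "x \<in> carrier_vec n" "y \<in> carrier_vec n" using xy assms by auto
  show "x = y"
  proof (rule eq_vecI)
    fix i assume "i < dim_vec y"
    then have "map_vec \<tau> x $ i = map_vec \<tau> y $ i" "i < n" using xy c by auto
    then show "x $ i = y $ i" using c co_inj[OF co] by auto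
  qed (use c in auto)
qed

lemma dualg_E:
  assumes "C \<subseteq> carrier_vec n"
  shows "dualg \<tau> n C = dual_E n (map_vec \<tau> ` C)"
proof -
  have eq': "\<And>x y. x \<in> carrier_vec n \<Longrightarrow> y \<in> C \<Longrightarrow> sform \<tau> x y = x \<bullet> map_vec \<tau> y"
    using assms sform_E[OF co] by blast
  show ?thesis unfolding dualg_def dual_E_def using eq' by auto
qed

lemma lc_dualg:
  assumes "C \<subseteq> carrier_vec n"
  shows "linear_code n (dualg \<tau> n C)"
proof -
  have "map_vec \<tau> ` C \<subseteq> carrier_vec n" using assms by auto
  then show ?thesis unfolding dualg_E[OF assms] by (rule lc_dual_E)
qed

lemma card_dualg:
  fixes C :: "'a::{finite,field} vec set"
  assumes lc: "linear_code n C"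
  shows "card (dualg \<tau> n C) * card C = card (UNIV :: 'a set) ^ n"
  using dual_E_card[OF lc_map[OF lc]] dualg_E[OF lcD(1)[OF lc]] card_map[OF lcD(1)[OF lc]] by simp

lemma dualg_anti: "X \<subseteq> Y \<Longrightarrow> dualg \<tau> n Y \<subseteq> dualg \<tau> n X"
  unfolding dualg_def by auto

lemma dualg_dualg:
  fixes C :: "'a::{finite,field} vec set"
  assumes lc: "linear_code n C"
  shows "dualg \<tau> n (dualg \<tau> n C) = C"
proof -
  note cC = lcD(1)[OF lc]
  have sub: "C \<subseteq> dualg \<tau> n (dualg \<tau> n C)"
  proof
    fix y assume y: "y \<in> C"
    have cy: "y \<in> carrier_vec n" using y cC by auto
    have "sform \<tau> y x = 0" if x: "x \<in> dualg \<tau> n C" for x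
    proof -
      have "x \<in> carrier_vec n" "sform \<tau> x y = 0" using x y unfolding dualg_def by auto
      then show ?thesis using sform_sym[OF co _ cy] co_0[OF co] by metis
    qed
    then show "y \<in> dualg \<tau> n (dualg \<tau> n C)" unfolding dualg_def using cy by auto
  qed
  have lcd: "linear_code n (dualg \<tau> n C)" using lc_dualg[OF cC] .
  have c1: "card (dualg \<tau> n (dualg \<tau> n C)) * card (dualg \<tau> n C) = card (UNIV :: 'a set) ^ n"
    using card_dualg[OF lcd] .
  have c2: "card (dualg \<tau> n C) * card C = card (UNIV :: 'a set) ^ n" using card_dualg[OF lc] .
  have fd: "finite (dualg \<tau> n C)" using finite_subset[OF lcD(1)[OF lcd] finite_carrier_vec] .
  have "card (dualg \<tau> n C) > 0" using lcD(2)[OF lcd] fd card_gt_0_iff by blast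
  then have ceq: "card (dualg \<tau> n (dualg \<tau> n C)) = card C" using c1 c2 by (metis mult.commute mult_right_cancel less_not_refl2)
  have fdd: "finite (dualg \<tau> n (dualg \<tau> n C))"
    using finite_subset[OF lcD(1)[OF lc_dualg[OF lcD(1)[OF lcd]]] finite_carrier_vec] .
  show ?thesis using card_subset_eq[OF fdd sub] ceq by simp
qed

lemma dualg_ssum:
  assumes X: "linear_code n X" and Y: "linear_code n Y"
  shows "dualg \<tau> n (ssum X Y) = dualg \<tau> n X \<inter> dualg \<tau> n Y"
proof (rule Set.set_eqI, rule iffI)
  note cx = lcD(1)[OF X] and cy = lcD(1)[OF Y]
  fix x assume x: "x \<in> dualg \<tau> n (ssum X Y)"
  have "X \<subseteq> ssum X Y"
  proof
    fix a assume a: "a \<in> X"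
    have "a = a + 0\<^sub>v n" using a cx by auto
    then show "a \<in> ssum X Y" unfolding ssum_def using a lcD(2)[OF Y] by blast
  qed
  moreover have "Y \<subseteq> ssum X Y"
  proof
    fix a assume a: "a \<in> Y"
    have "a = 0\<^sub>v n + a" using a cy by auto
    then show "a \<in> ssum X Y" unfolding ssum_def using a lcD(2)[OF X] by blast
  qed
  ultimately show "x \<in> dualg \<tau> n X \<inter> dualg \<tau> n Y" using x dualg_anti by blast
next
  note cx = lcD(1)[OF X] and cy = lcD(1)[OF Y]
  fix x assume x: "x \<in> dualg \<tau> n X \<inter> dualg \<tau> n Y"
  have cxx: "x \<in> carrier_vec n" using x unfolding dualg_def by auto
  show "x \<in> dualg \<tau> n (ssum X Y)" unfolding dualg_def
  proof (intro CollectI conjI ballI cxx)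
    fix z assume "z \<in> ssum X Y"
    then obtain a b where e: "z = a + b" "a \<in> X" "b \<in> Y" unfolding ssum_def by blast
    have "sform \<tau> x z = sform \<tau> x a + sform \<tau> x b"
      unfolding e using sform_add_right[OF co cxx] e cx cy by auto
    then show "sform \<tau> x z = 0" using x e unfolding dualg_def by auto
  qed
qed

end

lemma uuv_carrier:
  assumes "A \<subseteq> carrier_vec n" "B \<subseteq> carrier_vec n"
  shows "uuv A B \<subseteq> carrier_vec (2 * n)"
proof
  fix x assume "x \<in> uuv A B"
  then obtain u v where e: "x = u @\<^sub>v (u + v)" "u \<in> A" "v \<in> B" unfolding uuv_def by blast
  have c: "u \<in> carrier_vec n" "v \<in> carrier_vec n" using e assms by auto
  have "u @\<^sub>v (u + v) \<in> carrier_vec (n + n)" using c by (intro append_carrier_vec add_carrier_vec)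
  then show "x \<in> carrier_vec (2 * n)" using e by (simp add: mult_2)
qed

lemma lc_uuv:
  assumes lA: "linear_code n A" and lB: "linear_code n B"
  shows "linear_code (2 * n) (uuv A B)"
  unfolding lc_iff
proof (intro conjI ballI allI)
  note cA = lcD(1)[OF lA] and cB = lcD(1)[OF lB]
  have nn: "2 * n = n + n" by simp
  show "uuv A B \<subseteq> carrier_vec (2 * n)" using uuv_carrier[OF cA cB] .
  have "0\<^sub>v (2 * n) = 0\<^sub>v n @\<^sub>v (0\<^sub>v n + (0\<^sub>v n :: 'a vec))" by (intro eq_vecI) auto
  then show "0\<^sub>v (2 * n) \<in> uuv A B" unfolding uuv_def using lcD(2)[OF lA] lcD(2)[OF lB] by blast
  fix a b assume "a \<in> uuv A B" "b \<in> uuv A B"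
  then obtain u v u' v' where e: "a = u @\<^sub>v (u + v)" "b = u' @\<^sub>v (u' + v')" "u \<in> A" "v \<in> B" "u' \<in> A" "v' \<in> B"
    unfolding uuv_def by blast
  have c: "u \<in> carrier_vec n" "v \<in> carrier_vec n" "u' \<in> carrier_vec n" "v' \<in> carrier_vec n"
    using e cA cB by auto
  have "a + b = (u + u') @\<^sub>v ((u + u') + (v + v'))"
    unfolding e using c by (subst append_vec_add[of _ n _ _ n]) (auto intro!: eq_vecI simp: algebra_simps)
  moreover have "u + u' \<in> A" "v + v' \<in> B" using lcD(3)[OF lA] lcD(3)[OF lB] e by auto
  ultimately show "a + b \<in> uuv A B" unfolding uuv_def by blast
next
  note cA = lcD(1)[OF lA] and cB = lcD(1)[OF lB]
  fix c a assume "a \<in> uuv A B"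
  then obtain u v where e: "a = u @\<^sub>v (u + v)" "u \<in> A" "v \<in> B" unfolding uuv_def by blast
  have cc: "u \<in> carrier_vec n" "v \<in> carrier_vec n" using e cA cB by auto
  have "c \<cdot>\<^sub>v a = (c \<cdot>\<^sub>v u) @\<^sub>v (c \<cdot>\<^sub>v u + c \<cdot>\<^sub>v v)"
    unfolding e using cc by (intro eq_vecI) (auto simp: algebra_simps)
  moreover have "c \<cdot>\<^sub>v u \<in> A" "c \<cdot>\<^sub>v v \<in> B" using lcD(4)[OF lA] lcD(4)[OF lB] e by auto
  ultimately show "c \<cdot>\<^sub>v a \<in> uuv A B" unfolding uuv_def by blast
qed


lemma sform_zero_right:
  assumes "conj_ok \<tau>" "x \<in> carrier_vec n"
  shows "sform \<tau> x (0\<^sub>v n) = 0"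
  unfolding sform_def using co_0[OF assms(1)] assms(2) by simp

lemma pow_le_exp:
  assumes "card (UNIV :: 'a::{finite,field} set) ^ x \<le> card (UNIV :: 'a set) ^ y"
  shows "x \<le> y"
  using assms card_ge2[where ?'a='a] by (simp add: power_le_imp_le_exp)

lemma pow_eq_exp:
  assumes "card (UNIV :: 'a::{finite,field} set) ^ x = card (UNIV :: 'a set) ^ y"
  shows "x = y"
  using assms card_ge2[where ?'a='a] by (simp add: power_inject_exp)

lemma hull_uuv_char:
  fixes A B :: "'a::{finite,field} vec set"
  assumes co: "conj_ok \<tau>" and lA: "linear_code n A" and lB: "linear_code n B"
    and dbl: "\<And>u u'. u \<in> A \<Longrightarrow> u' \<in> A \<Longrightarrow> sform \<tau> u u' + sform \<tau> u u' = 0"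
  shows "uuv A B \<inter> dualg \<tau> (2 * n) (uuv A B) =
    (\<lambda>(u, v). u @\<^sub>v (u + v)) ` {(u, v). u \<in> A \<and> v \<in> B \<and> v \<in> dualg \<tau> n A \<and> u + v \<in> dualg \<tau> n B}"
    (is "?H = ?f ` ?P")
proof -
  note cA = lcD(1)[OF lA] and cB = lcD(1)[OF lB]
  have nn: "2 * n = n + n" by simp
  have key: "sform \<tau> (u @\<^sub>v (u + v)) (u' @\<^sub>v (u' + v')) =
      (sform \<tau> u u' + sform \<tau> u u') + sform \<tau> v u' + sform \<tau> (u + v) v'"
    if c: "u \<in> carrier_vec n" "v \<in> carrier_vec n" "u' \<in> carrier_vec n" "v' \<in> carrier_vec n" for u v u' v'
  proof -
    have uv: "u + v \<in> carrier_vec n" "u' + v' \<in> carrier_vec n" using c by auto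
    have "sform \<tau> (u @\<^sub>v (u + v)) (u' @\<^sub>v (u' + v')) = sform \<tau> u u' + sform \<tau> (u + v) (u' + v')"
      by (rule sform_append[OF c(1) uv(1) c(3) uv(2)])
    also have "sform \<tau> (u + v) (u' + v') = sform \<tau> (u + v) u' + sform \<tau> (u + v) v'"
      by (rule sform_add_right[OF co uv(1) c(3,4)])
    also have "sform \<tau> (u + v) u' = sform \<tau> u u' + sform \<tau> v u'"
      by (rule sform_add_left[OF c(1,2,3)])
    finally show ?thesis by (simp add: algebra_simps)
  qed
  show ?thesis
  proof (rule Set.set_eqI, rule iffI)
    fix x assume x: "x \<in> ?H"
    then obtain u v where e: "x = u @\<^sub>v (u + v)" "u \<in> A" "v \<in> B" unfolding uuv_def by blast
    have c: "u \<in> carrier_vec n" "v \<in> carrier_vec n" using e cA cB by auto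
    have xd: "\<forall>y\<in>uuv A B. sform \<tau> x y = 0" using x unfolding dualg_def by blast
    have "v \<in> dualg \<tau> n A" unfolding dualg_def
    proof (intro CollectI conjI ballI c(2))
      fix u' assume u': "u' \<in> A"
      have cu': "u' \<in> carrier_vec n" using u' cA by auto
      have z: "0\<^sub>v n \<in> B" using lcD(2)[OF lB] .
      have "u' @\<^sub>v (u' + 0\<^sub>v n) \<in> uuv A B" unfolding uuv_def using u' z by blast
      then have "sform \<tau> x (u' @\<^sub>v (u' + 0\<^sub>v n)) = 0" using xd by blast
      then have "(sform \<tau> u u' + sform \<tau> u u') + sform \<tau> v u' + sform \<tau> (u + v) (0\<^sub>v n) = 0"
        using key[OF c cu' zero_carrier_vec] e(1) by simp
      moreover have "u + v \<in> carrier_vec n" using c by simp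
      ultimately show "sform \<tau> v u' = 0" using dbl[OF e(2) u'] sform_zero_right[OF co] by simp
    qed
    moreover have "u + v \<in> dualg \<tau> n B" unfolding dualg_def
    proof (intro CollectI conjI ballI)
      show "u + v \<in> carrier_vec n" using c by auto
      fix v' assume v': "v' \<in> B"
      have cv': "v' \<in> carrier_vec n" using v' cB by auto
      have z: "0\<^sub>v n \<in> A" using lcD(2)[OF lA] .
      have "0\<^sub>v n @\<^sub>v (0\<^sub>v n + v') \<in> uuv A B" unfolding uuv_def using v' z by blast
      then have "sform \<tau> x (0\<^sub>v n @\<^sub>v (0\<^sub>v n + v')) = 0" using xd by blast
      then show "sform \<tau> (u + v) v' = 0"
        using key[OF c zero_carrier_vec cv'] e(1) sform_zero_right[OF co c(1)] sform_zero_right[OF co c(2)] by simp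
    qed
    ultimately show "x \<in> ?f ` ?P" using e by force
  next
    fix x assume "x \<in> ?f ` ?P"
    then obtain u v where e: "x = u @\<^sub>v (u + v)" "u \<in> A" "v \<in> B" "v \<in> dualg \<tau> n A" "u + v \<in> dualg \<tau> n B"
      by auto
    have c: "u \<in> carrier_vec n" "v \<in> carrier_vec n" using e cA cB by auto
    have xu: "x \<in> uuv A B" unfolding uuv_def using e by blast
    have "x \<in> dualg \<tau> (2 * n) (uuv A B)" unfolding dualg_def
    proof (intro CollectI conjI ballI)
      show "x \<in> carrier_vec (2 * n)" using uuv_carrier[OF cA cB] xu by auto
      fix y assume "y \<in> uuv A B"
      then obtain u' v' where e': "y = u' @\<^sub>v (u' + v')" "u' \<in> A" "v' \<in> B" unfolding uuv_def by blast
      have c': "u' \<in> carrier_vec n" "v' \<in> carrier_vec n" using e' cA cB by auto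
      have "sform \<tau> v u' = 0" using e(4) e'(2) unfolding dualg_def by auto
      moreover have "sform \<tau> (u + v) v' = 0" using e(5) e'(3) unfolding dualg_def by auto
      ultimately show "sform \<tau> x y = 0" using key[OF c c'] e(1) e'(1) dbl[OF e(2) e'(2)] by simp
    qed
    then show "x \<in> ?H" using xu by blast
  qed
qed

lemma part2_generic:
  fixes A B :: "'a::{finite,field} vec set"
  assumes co: "conj_ok \<tau>" and lA: "linear_code n A" and lB: "linear_code n B"
    and dbl: "\<And>u u'. u \<in> A \<Longrightarrow> u' \<in> A \<Longrightarrow> sform \<tau> u u' + sform \<tau> u u' = 0"
  shows "int (code_dim (2 * n) (uuv A B \<inter> dualg \<tau> (2 * n) (uuv A B)))
           \<le> 2 * int (code_dim n (A \<inter> dualg \<tau> n B)) + int (code_dim n B) - int (code_dim n A)"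
    and "2 * int (code_dim n (A \<inter> dualg \<tau> n B)) + int (code_dim n (B \<inter> dualg \<tau> n B)) - int (code_dim n A)
           \<le> int (code_dim (2 * n) (uuv A B \<inter> dualg \<tau> (2 * n) (uuv A B)))"
    and "B \<subseteq> dualg \<tau> n B \<Longrightarrow> int (code_dim (2 * n) (uuv A B \<inter> dualg \<tau> (2 * n) (uuv A B)))
           = 2 * int (code_dim n (A \<inter> dualg \<tau> n B)) + int (code_dim n B) - int (code_dim n A)"
proof -
  define q where "q = card (UNIV :: 'a set)"
  define dA where "dA = dualg \<tau> n A"
  define dB where "dB = dualg \<tau> n B"
  define H where "H = uuv A B \<inter> dualg \<tau> (2 * n) (uuv A B)"
  define T where "T = A \<inter> dB"
  define L where "L = B \<inter> dB"
  define W where "W = B \<inter> dA"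
  define P where "P = {(u, v). u \<in> A \<and> v \<in> B \<and> v \<in> dA \<and> u + v \<in> dB}"
  define f where "f = (\<lambda>(u, v). u @\<^sub>v (u + v :: 'a vec))"
  define I where "I = snd ` P"
  note cA = lcD(1)[OF lA] and cB = lcD(1)[OF lB]
  have ldA: "linear_code n dA" unfolding dA_def using lc_dualg[OF co cA] .
  have ldB: "linear_code n dB" unfolding dB_def using lc_dualg[OF co cB] .
  have lH: "linear_code (2 * n) H" unfolding H_def
    using lc_inter[OF lc_uuv[OF lA lB] lc_dualg[OF co uuv_carrier[OF cA cB]]] .
  have lT: "linear_code n T" unfolding T_def using lc_inter[OF lA ldB] .
  have lL: "linear_code n L" unfolding L_def using lc_inter[OF lB ldB] .
  have lW: "linear_code n W" unfolding W_def using lc_inter[OF lB ldA] .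
  have lLW: "linear_code n (L \<inter> W)" using lc_inter[OF lL lW] .
  have fin: "finite X" if "linear_code n X" for X :: "'a vec set"
    using finite_subset[OF lcD(1)[OF that] finite_carrier_vec] .
  have Hc: "H = f ` P" unfolding H_def f_def P_def dA_def dB_def
    using hull_uuv_char[OF co lA lB dbl] .
  have inj: "inj_on f P"
  proof (rule inj_onI)
    fix p p' assume p: "p \<in> P" and p': "p' \<in> P" and e: "f p = f p'"
    obtain u v u' v' where pp: "p = (u, v)" "p' = (u', v')" by (cases p, cases p')
    have c: "u \<in> carrier_vec n" "v \<in> carrier_vec n" "u' \<in> carrier_vec n" "v' \<in> carrier_vec n"
      using p p' pp cA cB unfolding P_def by auto
    have "u @\<^sub>v (u + v) = u' @\<^sub>v (u' + v')" using e pp unfolding f_def by simp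
    then have e2: "u = u'" "u + v = u' + v'" using append_vec_eq[OF c(1) c(3)] by auto
    have "v = v'"
    proof (rule eq_vecI)
      fix i assume "i < dim_vec v'"
      then have i: "i < n" using c by auto
      have "(u + v) $ i = (u' + v') $ i" using e2 by simp
      then show "v $ i = v' $ i" using i c e2 by simp
    qed (use c in auto)
    then show "p = p'" using pp e2 by simp
  qed
  have finP: "finite P"
  proof (rule finite_subset)
    show "P \<subseteq> A \<times> B" unfolding P_def by auto
    show "finite (A \<times> B)" using fin[OF lA] fin[OF lB] by simp
  qed
  have cardH: "card H = card P" unfolding Hc using card_image[OF inj] .
  have fib: "card {p \<in> P. snd p = v} = card T" if v: "v \<in> snd ` P" for v
  proof -
    obtain u0 where u0: "(u0, v) \<in> P" using v by force
    have u0A: "u0 \<in> A" and vB: "v \<in> B" and vdA: "v \<in> dA" and uvB: "u0 + v \<in> dB"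
      using u0 unfolding P_def by auto
    have c0: "u0 \<in> carrier_vec n" "v \<in> carrier_vec n" using u0A vB cA cB by auto
    have "bij_betw (\<lambda>w. (u0 + w, v)) T {p \<in> P. snd p = v}"
    proof (rule bij_betwI[where g = "\<lambda>p. fst p - u0"])
      show "(\<lambda>w. (u0 + w, v)) \<in> T \<rightarrow> {p \<in> P. snd p = v}"
      proof
        fix w assume w: "w \<in> T"
        have cw: "w \<in> carrier_vec n" using w cA unfolding T_def by auto
        have "u0 + w \<in> A" using lcD(3)[OF lA u0A] w unfolding T_def by auto
        moreover have "(u0 + w) + v = (u0 + v) + w" using c0 cw by (intro eq_vecI) auto
        moreover have "(u0 + v) + w \<in> dB" using lcD(3)[OF ldB uvB] w unfolding T_def by auto
        ultimately show "(u0 + w, v) \<in> {p \<in> P. snd p = v}" unfolding P_def using vB vdA by auto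
      qed
      show "(\<lambda>p. fst p - u0) \<in> {p \<in> P. snd p = v} \<rightarrow> T"
      proof
        fix p assume p: "p \<in> {p \<in> P. snd p = v}"
        then obtain u where pe: "p = (u, v)" "u \<in> A" "u + v \<in> dB" unfolding P_def by auto
        have cu: "u \<in> carrier_vec n" using pe cA by auto
        have "u - u0 \<in> A" using lc_diff[OF lA pe(2) u0A] .
        moreover have "u - u0 = (u + v) - (u0 + v)" using cu c0 by (intro eq_vecI) auto
        moreover have "(u + v) - (u0 + v) \<in> dB" using lc_diff[OF ldB pe(3) uvB] .
        ultimately show "fst p - u0 \<in> T" unfolding T_def using pe by auto
      qed
      show "fst (u0 + w, v) - u0 = w" if "w \<in> T" for w
      proof -
        have cw: "w \<in> carrier_vec n" using that cA unfolding T_def by auto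
        show ?thesis using cw c0 by (intro eq_vecI) auto
      qed
      show "(u0 + (fst p - u0), v) = p" if pp: "p \<in> {p \<in> P. snd p = v}" for p
      proof -
        obtain u where pe: "p = (u, v)" "u \<in> A" using pp unfolding P_def by auto
        have cu: "u \<in> carrier_vec n" using pe cA by auto
        have "u0 + (u - u0) = u" using cu c0 by (intro eq_vecI) auto
        then show ?thesis using pe by simp
      qed
    qed
    then show ?thesis by (simp add: bij_betw_same_card[symmetric])
  qed
  have cardP: "card P = card I * card T" unfolding I_def
    by (rule card_fibers[OF finP]) (use fib in auto)
  have IW: "I \<subseteq> W" unfolding I_def W_def P_def by auto
  have LWI: "L \<inter> W \<subseteq> I"
  proof
    fix v assume v: "v \<in> L \<inter> W"
    have "0\<^sub>v n + v = v" using v cB unfolding L_def by auto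
    then have "(0\<^sub>v n, v) \<in> P" unfolding P_def using v lcD(2)[OF lA] unfolding L_def W_def by auto
    then show "v \<in> I" unfolding I_def by force
  qed
  have WI: "W \<subseteq> I" if so: "B \<subseteq> dB"
  proof
    fix v assume v: "v \<in> W"
    have "0\<^sub>v n + v = v" using v cB unfolding W_def by auto
    then have "(0\<^sub>v n, v) \<in> P" unfolding P_def using v lcD(2)[OF lA] so unfolding W_def by auto
    then show "v \<in> I" unfolding I_def by force
  qed
  have finW: "finite W" using fin[OF lW] .
  have Wd: "W = dualg \<tau> n (ssum A dB)"
    using dualg_ssum[OF co lA ldB] dualg_dualg[OF co lB] unfolding W_def dA_def dB_def by auto
  have e1: "card W * card (ssum A dB) = q ^ n" unfolding Wd q_def using card_dualg[OF co lc_ssum[OF lA ldB]] .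
  have e2: "card (ssum A dB) * card T = card A * card dB" unfolding T_def using card_ssum[OF lA ldB] .
  have e3: "card dB * card B = q ^ n" unfolding dB_def q_def using card_dualg[OF co lB] .
  have dBpos: "card dB > 0" using lcD(2)[OF ldB] fin[OF ldB] card_gt_0_iff by blast
  have "card dB * (card W * card A) = card W * (card (ssum A dB) * card T)"
    using e2 by (simp add: mult_ac)
  also have "\<dots> = q ^ n * card T" using e1 by (simp add: mult_ac)
  also have "\<dots> = card dB * (card B * card T)" using e3 by (simp add: mult_ac)
  finally have WA: "card W * card A = card B * card T" using dBpos by simp
  have sLW: "ssum L W \<subseteq> B" unfolding ssum_def L_def W_def using lcD(3)[OF lB] by auto
  have "card (ssum L W) \<le> card B" using card_mono[OF fin[OF lB] sLW] .
  then have LW: "card L * card W \<le> card B * card (L \<inter> W)"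
    using card_ssum[OF lL lW] by (metis mult_le_mono1)
  define h where "h = code_dim (2 * n) H"
  define a where "a = code_dim n A"
  define b where "b = code_dim n B"
  define t where "t = code_dim n T"
  define l where "l = code_dim n L"
  define w where "w = code_dim n W"
  define m where "m = code_dim n (L \<inter> W)"
  have qH: "card H = q ^ h" unfolding h_def q_def using card_code[OF lH] .
  have qA: "card A = q ^ a" unfolding a_def q_def using card_code[OF lA] .
  have qB: "card B = q ^ b" unfolding b_def q_def using card_code[OF lB] .
  have qT: "card T = q ^ t" unfolding t_def q_def using card_code[OF lT] .
  have qL: "card L = q ^ l" unfolding l_def q_def using card_code[OF lL] .
  have qW: "card W = q ^ w" unfolding w_def q_def using card_code[OF lW] .
  have qM: "card (L \<inter> W) = q ^ m" unfolding m_def q_def using card_code[OF lLW] .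
  have cI1: "card I \<le> q ^ w" using card_mono[OF finW IW] qW by simp
  have cI2: "q ^ m \<le> card I" using card_mono[OF finite_subset[OF IW finW] LWI] qM by simp
  have hI: "q ^ h = card I * q ^ t" using qH cardH cardP qT by simp
  have "card I * q ^ t \<le> q ^ w * q ^ t" using cI1 by (rule mult_right_mono) simp
  then have "q ^ h \<le> q ^ (w + t)" using hI by (simp add: power_add)
  then have r1: "h \<le> w + t" unfolding q_def by (rule pow_le_exp)
  have "q ^ m * q ^ t \<le> card I * q ^ t" using cI2 by (rule mult_right_mono) simp
  then have "q ^ (m + t) \<le> q ^ h" using hI by (simp add: power_add)
  then have r2: "m + t \<le> h" unfolding q_def by (rule pow_le_exp)
  have "q ^ (w + a) = q ^ (b + t)" using WA qW qA qB qT by (simp add: power_add)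
  then have r3: "w + a = b + t" unfolding q_def by (rule pow_eq_exp)
  have "q ^ (l + w) \<le> q ^ (b + m)" using LW qL qW qB qM by (simp add: power_add)
  then have r4: "l + w \<le> b + m" unfolding q_def by (rule pow_le_exp)
  show "int (code_dim (2 * n) (uuv A B \<inter> dualg \<tau> (2 * n) (uuv A B)))
           \<le> 2 * int (code_dim n (A \<inter> dualg \<tau> n B)) + int (code_dim n B) - int (code_dim n A)"
    using r1 r3 unfolding h_def H_def t_def T_def dB_def a_def b_def by linarith
  show "2 * int (code_dim n (A \<inter> dualg \<tau> n B)) + int (code_dim n (B \<inter> dualg \<tau> n B)) - int (code_dim n A)
           \<le> int (code_dim (2 * n) (uuv A B \<inter> dualg \<tau> (2 * n) (uuv A B)))"
    using r2 r3 r4 unfolding h_def H_def t_def T_def dB_def a_def b_def l_def L_def by linarith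
  assume so: "B \<subseteq> dualg \<tau> n B"
  have "I = W" using WI[OF so[folded dB_def]] IW by blast
  then have "q ^ h = q ^ (w + t)" using qH cardH cardP qW qT by (simp add: power_add)
  then have "h = w + t" unfolding q_def by (rule pow_eq_exp)
  then show "int (code_dim (2 * n) (uuv A B \<inter> dualg \<tau> (2 * n) (uuv A B)))
           = 2 * int (code_dim n (A \<inter> dualg \<tau> n B)) + int (code_dim n B) - int (code_dim n A)"
    using r3 unfolding h_def H_def t_def T_def dB_def a_def b_def by linarith
qed

lemma hd_append:
  assumes "a \<in> carrier_vec n" "a' \<in> carrier_vec n" "b \<in> carrier_vec m" "b' \<in> carrier_vec m"
  shows "hamming_dist (a @\<^sub>v b) (a' @\<^sub>v b') = hamming_dist a a' + hamming_dist b b'"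
proof -
  let ?S1 = "{i. i < n \<and> a $ i \<noteq> a' $ i}"
  let ?S2 = "{i. i < m \<and> b $ i \<noteq> b' $ i}"
  have "{i. i < dim_vec (a @\<^sub>v b) \<and> (a @\<^sub>v b) $ i \<noteq> (a' @\<^sub>v b') $ i} = ?S1 \<union> (\<lambda>i. n + i) ` ?S2"
  proof (rule Set.set_eqI, rule iffI)
    fix i assume i: "i \<in> {i. i < dim_vec (a @\<^sub>v b) \<and> (a @\<^sub>v b) $ i \<noteq> (a' @\<^sub>v b') $ i}"
    show "i \<in> ?S1 \<union> (\<lambda>i. n + i) ` ?S2"
    proof (cases "i < n")
      case True then show ?thesis using i assms by auto
    next
      case False
      then have "i - n \<in> ?S2" using i assms by auto
      moreover have "i = n + (i - n)" using False by simp
      ultimately show ?thesis by blast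
    qed
  next
    fix i assume "i \<in> ?S1 \<union> (\<lambda>i. n + i) ` ?S2"
    then show "i \<in> {i. i < dim_vec (a @\<^sub>v b) \<and> (a @\<^sub>v b) $ i \<noteq> (a' @\<^sub>v b') $ i}" using assms by auto
  qed
  moreover have "card (?S1 \<union> (\<lambda>i. n + i) ` ?S2) = card ?S1 + card ?S2"
    by (subst card_Un_disjoint) (auto simp: card_image)
  moreover have "hamming_dist a a' = card ?S1" "hamming_dist b b' = card ?S2"
    unfolding hamming_dist_def using assms by auto
  ultimately show ?thesis unfolding hamming_dist_def by simp
qed

lemma hd_shift:
  fixes u :: "'a::field vec"
  assumes "u \<in> carrier_vec n" "u' \<in> carrier_vec n" "v \<in> carrier_vec n"
  shows "hamming_dist (u + v) (u' + v) = hamming_dist u u'"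
  unfolding hamming_dist_def using assms by (intro arg_cong[where f = card]) auto

lemma hd_tri:
  fixes u :: "'a::field vec"
  assumes "u \<in> carrier_vec n" "u' \<in> carrier_vec n" "v \<in> carrier_vec n" "v' \<in> carrier_vec n"
  shows "hamming_dist v v' \<le> hamming_dist u u' + hamming_dist (u + v) (u' + v')"
proof -
  have "{i. i < dim_vec v \<and> v $ i \<noteq> v' $ i} \<subseteq>
        {i. i < dim_vec u \<and> u $ i \<noteq> u' $ i} \<union> {i. i < dim_vec (u + v) \<and> (u + v) $ i \<noteq> (u' + v') $ i}"
    using assms by auto
  then have "card {i. i < dim_vec v \<and> v $ i \<noteq> v' $ i} \<le>
        card ({i. i < dim_vec u \<and> u $ i \<noteq> u' $ i} \<union> {i. i < dim_vec (u + v) \<and> (u + v) $ i \<noteq> (u' + v') $ i})"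
    by (rule card_mono[rotated]) auto
  also have "\<dots> \<le> card {i. i < dim_vec u \<and> u $ i \<noteq> u' $ i} + card {i. i < dim_vec (u + v) \<and> (u + v) $ i \<noteq> (u' + v') $ i}"
    by (rule card_Un_le)
  finally show ?thesis unfolding hamming_dist_def .
qed

lemma min_dist_uuv:
  fixes A B :: "'a::field vec set"
  assumes lA: "linear_code n A" and lB: "linear_code n B"
    and mA: "min_distance A d1" and mB: "min_distance B d2"
  shows "min_distance (uuv A B) (min (2 * d1) d2)"
proof -
  note cA = lcD(1)[OF lA] and cB = lcD(1)[OF lB]
  have z: "0\<^sub>v n \<in> A" "0\<^sub>v n \<in> B" using lcD(2)[OF lA] lcD(2)[OF lB] .
  obtain x1 y1 where a1: "x1 \<in> A" "y1 \<in> A" "x1 \<noteq> y1" "hamming_dist x1 y1 = d1"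
    using mA unfolding min_distance_def by blast
  obtain x2 y2 where a2: "x2 \<in> B" "y2 \<in> B" "x2 \<noteq> y2" "hamming_dist x2 y2 = d2"
    using mB unfolding min_distance_def by blast
  have lo1: "\<And>x y. x \<in> A \<Longrightarrow> y \<in> A \<Longrightarrow> x \<noteq> y \<Longrightarrow> d1 \<le> hamming_dist x y"
    using mA unfolding min_distance_def by blast
  have lo2: "\<And>x y. x \<in> B \<Longrightarrow> y \<in> B \<Longrightarrow> x \<noteq> y \<Longrightarrow> d2 \<le> hamming_dist x y"
    using mB unfolding min_distance_def by blast
  have ex: "\<exists>x\<in>uuv A B. \<exists>y\<in>uuv A B. x \<noteq> y \<and> hamming_dist x y = min (2 * d1) d2"
  proof (cases "2 * d1 \<le> d2")
    case True
    have c: "x1 \<in> carrier_vec n" "y1 \<in> carrier_vec n" using a1 cA by auto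
    have m1: "x1 @\<^sub>v (x1 + 0\<^sub>v n) \<in> uuv A B" "y1 @\<^sub>v (y1 + 0\<^sub>v n) \<in> uuv A B"
      unfolding uuv_def using a1 z by blast+
    have ne: "x1 @\<^sub>v (x1 + 0\<^sub>v n) \<noteq> y1 @\<^sub>v (y1 + 0\<^sub>v n)" using append_vec_eq[OF c] a1(3) by auto
    have "hamming_dist (x1 @\<^sub>v (x1 + 0\<^sub>v n)) (y1 @\<^sub>v (y1 + 0\<^sub>v n)) = 2 * d1"
      using hd_append[OF c, of "x1 + 0\<^sub>v n" n "y1 + 0\<^sub>v n"] c a1(4) by simp
    then show ?thesis using m1 ne True by (metis min.absorb1)
  next
    case False
    have c: "x2 \<in> carrier_vec n" "y2 \<in> carrier_vec n" using a2 cB by auto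
    have m1: "0\<^sub>v n @\<^sub>v (0\<^sub>v n + x2) \<in> uuv A B" "0\<^sub>v n @\<^sub>v (0\<^sub>v n + y2) \<in> uuv A B"
      unfolding uuv_def using a2 z by blast+
    have ne: "0\<^sub>v n @\<^sub>v (0\<^sub>v n + x2) \<noteq> 0\<^sub>v n @\<^sub>v (0\<^sub>v n + y2)"
      using a2(3) c append_vec_eq[OF zero_carrier_vec zero_carrier_vec, of n "0\<^sub>v n + x2" "0\<^sub>v n + y2"] by auto
    have "hamming_dist (0\<^sub>v n @\<^sub>v (0\<^sub>v n + x2)) (0\<^sub>v n @\<^sub>v (0\<^sub>v n + y2)) = d2"
      using hd_append[of "0\<^sub>v n" n "0\<^sub>v n" "0\<^sub>v n + x2" n "0\<^sub>v n + y2"] c a2(4)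
      by (simp add: hamming_dist_def)
    then show ?thesis using m1 ne False by (metis min.absorb2 nat_le_linear)
  qed
  have lo: "min (2 * d1) d2 \<le> hamming_dist x y" if xy: "x \<in> uuv A B" "y \<in> uuv A B" "x \<noteq> y" for x y
  proof -
    obtain u v where e: "x = u @\<^sub>v (u + v)" "u \<in> A" "v \<in> B" using xy(1) unfolding uuv_def by blast
    obtain u' v' where e': "y = u' @\<^sub>v (u' + v')" "u' \<in> A" "v' \<in> B" using xy(2) unfolding uuv_def by blast
    have c: "u \<in> carrier_vec n" "v \<in> carrier_vec n" "u' \<in> carrier_vec n" "v' \<in> carrier_vec n"
      using e e' cA cB by auto
    have hx: "hamming_dist x y = hamming_dist u u' + hamming_dist (u + v) (u' + v')"
      unfolding e e' using hd_append[OF c(1) c(3), of "u + v" n "u' + v'"] c by simp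
    show ?thesis
    proof (cases "v = v'")
      case True
      then have "u \<noteq> u'" using xy(3) e e' by auto
      then have "d1 \<le> hamming_dist u u'" using lo1 e(2) e'(2) by blast
      moreover have "hamming_dist (u + v) (u' + v') = hamming_dist u u'" using True hd_shift c by metis
      ultimately show ?thesis using hx by simp
    next
      case False
      then have "d2 \<le> hamming_dist v v'" using lo2 e(3) e'(3) by blast
      moreover have "hamming_dist v v' \<le> hamming_dist u u' + hamming_dist (u + v) (u' + v')"
        using hd_tri[OF c(1,3,2,4)] .
      ultimately show ?thesis using hx by simp
    qed
  qed
  show ?thesis unfolding min_distance_def using ex lo by blast
qed

lemma card_uuv:
  fixes A B :: "'a::{finite,field} vec set"
  assumes lA: "linear_code n A" and lB: "linear_code n B"
  shows "card (uuv A B) = card A * card B"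
proof -
  note cA = lcD(1)[OF lA] and cB = lcD(1)[OF lB]
  define f where "f = (\<lambda>(u, v). u @\<^sub>v (u + v :: 'a vec))"
  have img: "uuv A B = f ` (A \<times> B)" unfolding uuv_def f_def by auto
  have inj: "inj_on f (A \<times> B)"
  proof (rule inj_onI)
    fix p p' assume p: "p \<in> A \<times> B" and p': "p' \<in> A \<times> B" and e: "f p = f p'"
    obtain u v u' v' where pp: "p = (u, v)" "p' = (u', v')" by (cases p, cases p')
    have c: "u \<in> carrier_vec n" "v \<in> carrier_vec n" "u' \<in> carrier_vec n" "v' \<in> carrier_vec n"
      using p p' pp cA cB by auto
    have "u @\<^sub>v (u + v) = u' @\<^sub>v (u' + v')" using e pp unfolding f_def by simp
    then have e2: "u = u'" "u + v = u' + v'" using append_vec_eq[OF c(1) c(3)] by auto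
    have "v = v'"
    proof (rule eq_vecI)
      fix i assume "i < dim_vec v'"
      then have i: "i < n" using c by auto
      have "(u + v) $ i = (u' + v') $ i" using e2 by simp
      then show "v $ i = v' $ i" using i c e2 by simp
    qed (use c in auto)
    then show "p = p'" using pp e2 by simp
  qed
  show ?thesis unfolding img card_image[OF inj] by (simp add: card_cartesian_product)
qed

lemma dim_uuv:
  fixes A B :: "'a::{finite,field} vec set"
  assumes lA: "linear_code n A" and lB: "linear_code n B"
  shows "code_dim (2 * n) (uuv A B) = code_dim n A + code_dim n B"
proof -
  have "card (UNIV :: 'a set) ^ code_dim (2 * n) (uuv A B) = card (UNIV :: 'a set) ^ (code_dim n A + code_dim n B)"
    using card_code[OF lc_uuv[OF lA lB]] card_uuv[OF lA lB] card_code[OF lA] card_code[OF lB]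
    by (simp add: power_add)
  then show ?thesis by (rule pow_eq_exp)
qed


lemma span_rows_eq:
  fixes G :: "'a::field mat"
  assumes "G \<in> carrier_mat k n"
  shows "LinearCombinations.module.span (class_ring :: 'a ring) (module_vec TYPE('a) n) (set (rows G))
     = {w \<in> carrier_vec n. \<exists>y\<in>carrier_vec k. G\<^sup>T *\<^sub>v y = w}"
proof -
  interpret vec_space "TYPE('a)" n .
  show ?thesis using row_space_eq[OF assms] assms unfolding row_space_def by simp
qed

lemma gen_uuv:
  fixes A B :: "'a::{finite,field} vec set"
  assumes lA: "linear_code n A" and lB: "linear_code n B"
    and G1: "is_gen_matrix n k1 G1 A" and G2: "is_gen_matrix n k2 G2 B"
    and dA: "code_dim n A = k1" and dB: "code_dim n B = k2"
  shows "is_gen_matrix (2 * n) (k1 + k2) (four_block_mat G1 G1 (0\<^sub>m k2 n) G2) (uuv A B)"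
proof -
  define M where "M = four_block_mat G1 G1 (0\<^sub>m k2 n) G2"
  have G1c: "G1 \<in> carrier_mat k1 n" and G2c: "G2 \<in> carrier_mat k2 n"
    using G1 G2 unfolding is_gen_matrix_def by auto
  have G1d: "distinct (rows G1)" and G2d: "distinct (rows G2)"
    using G1 G2 unfolding is_gen_matrix_def by auto
  have nn: "2 * n = n + n" by simp
  have Mc: "M \<in> carrier_mat (k1 + k2) (2 * n)" unfolding M_def nn using G1c G2c by auto
  have Zc: "0\<^sub>m k2 n \<in> carrier_mat k2 n" by simp
  have rowM1: "row M i = row G1 i @\<^sub>v row G1 i" if "i < k1" for i
    unfolding M_def using row_four_block_mat(1)[OF G1c G1c Zc G2c that] .
  have rowM2: "row M i = 0\<^sub>v n @\<^sub>v row G2 (i - k1)" if "\<not> i < k1" "i < k1 + k2" for i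
    unfolding M_def using row_four_block_mat(2)[OF G1c G1c Zc G2c that] that by simp
  interpret V1: vec_space "TYPE('a)" n .
  interpret V2: vec_space "TYPE('a)" "2 * n" .
  have z1: "0\<^sub>v n \<notin> set (rows G1)"
  proof -
    have "set (rows G1) \<subseteq> carrier_vec n" using rows_carrier[of G1] G1c by auto
    moreover have "V1.lin_indpt (set (rows G1))" using G1 unfolding is_gen_matrix_def by simp
    ultimately show ?thesis using V1.vs_zero_lin_dep by simp
  qed
  have dist: "distinct (rows M)"
    unfolding distinct_conv_nth
  proof (intro allI impI)
    fix i j assume i: "i < length (rows M)" and j: "j < length (rows M)" and ij: "i \<noteq> j"
    have i': "i < k1 + k2" and j': "j < k1 + k2" using i j Mc by auto
    have rr: "rows M ! i = row M i" "rows M ! j = row M j" using i j by auto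
    have r1: "row G1 a \<in> carrier_vec n" if "a < k1" for a using G1c that by auto
    have r2: "row G2 a \<in> carrier_vec n" if "a < k2" for a using G2c that by auto
    show "rows M ! i \<noteq> rows M ! j"
    proof (cases "i < k1"; cases "j < k1")
      assume a: "i < k1" "j < k1"
      have "row G1 i \<noteq> row G1 j" using G1d ij a G1c unfolding distinct_conv_nth by auto
      then show ?thesis using rr rowM1 a append_vec_eq[OF r1 r1] by simp
    next
      assume a: "i < k1" "\<not> j < k1"
      have "row G1 i \<noteq> 0\<^sub>v n" using z1 a G1c by (metis carrier_matD(1) nth_mem length_rows nth_rows)
      then show ?thesis using rr rowM1 rowM2 a j' append_vec_eq[OF r1 zero_carrier_vec] by simp
    next
      assume a: "\<not> i < k1" "j < k1"
      have "row G1 j \<noteq> 0\<^sub>v n" using z1 a G1c by (metis carrier_matD(1) nth_mem length_rows nth_rows)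
      then show ?thesis using rr rowM1 rowM2 a i' append_vec_eq[OF zero_carrier_vec r1] by auto
    next
      assume a: "\<not> i < k1" "\<not> j < k1"
      have "i - k1 \<noteq> j - k1" using a ij by simp
      then have "row G2 (i - k1) \<noteq> row G2 (j - k1)" using G2d a i' j' G2c unfolding distinct_conv_nth by auto
      moreover have "rows M ! i = 0\<^sub>v n @\<^sub>v row G2 (i - k1)" "rows M ! j = 0\<^sub>v n @\<^sub>v row G2 (j - k1)"
        using rr rowM2 a i' j' by auto
      ultimately show ?thesis using append_vec_eq[OF zero_carrier_vec[of n] zero_carrier_vec[of n]] by metis
    qed
  qed
  have spanA: "A = {w \<in> carrier_vec n. \<exists>y\<in>carrier_vec k1. G1\<^sup>T *\<^sub>v y = w}"
    using G1 span_rows_eq[OF G1c] unfolding is_gen_matrix_def by simp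
  have spanB: "B = {w \<in> carrier_vec n. \<exists>y\<in>carrier_vec k2. G2\<^sup>T *\<^sub>v y = w}"
    using G2 span_rows_eq[OF G2c] unfolding is_gen_matrix_def by simp
  have MT: "M\<^sup>T = four_block_mat G1\<^sup>T (0\<^sub>m n k2) G1\<^sup>T G2\<^sup>T"
    unfolding M_def using transpose_four_block_mat[OF G1c G1c Zc G2c] by simp
  have mv: "M\<^sup>T *\<^sub>v (y1 @\<^sub>v y2) = (G1\<^sup>T *\<^sub>v y1) @\<^sub>v (G1\<^sup>T *\<^sub>v y1 + G2\<^sup>T *\<^sub>v y2)"
    if y: "y1 \<in> carrier_vec k1" "y2 \<in> carrier_vec k2" for y1 y2
  proof -
    have "M\<^sup>T *\<^sub>v (y1 @\<^sub>v y2) = (G1\<^sup>T *\<^sub>v y1 + 0\<^sub>m n k2 *\<^sub>v y2) @\<^sub>v (G1\<^sup>T *\<^sub>v y1 + G2\<^sup>T *\<^sub>v y2)"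
      unfolding MT by (rule four_block_mat_mult_vec) (use G1c G2c y in auto)
    moreover have "G1\<^sup>T *\<^sub>v y1 + 0\<^sub>m n k2 *\<^sub>v y2 = G1\<^sup>T *\<^sub>v y1"
      using G1c y by (intro eq_vecI) auto
    ultimately show ?thesis by simp
  qed
  have span: "V2.span (set (rows M)) = uuv A B"
  proof -
    have "V2.span (set (rows M)) = {w \<in> carrier_vec (2 * n). \<exists>y\<in>carrier_vec (k1 + k2). M\<^sup>T *\<^sub>v y = w}"
      using span_rows_eq[OF Mc] .
    also have "\<dots> = uuv A B"
    proof (rule Set.set_eqI, rule iffI)
      fix w assume "w \<in> {w \<in> carrier_vec (2 * n). \<exists>y\<in>carrier_vec (k1 + k2). M\<^sup>T *\<^sub>v y = w}"
      then obtain y where y: "y \<in> carrier_vec (k1 + k2)" "w = M\<^sup>T *\<^sub>v y" by auto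
      define y1 where "y1 = vec_first y k1"
      define y2 where "y2 = vec_last y k2"
      have yy: "y = y1 @\<^sub>v y2" unfolding y1_def y2_def using y by simp
      have c: "y1 \<in> carrier_vec k1" "y2 \<in> carrier_vec k2" unfolding y1_def y2_def by auto
      have "w = (G1\<^sup>T *\<^sub>v y1) @\<^sub>v (G1\<^sup>T *\<^sub>v y1 + G2\<^sup>T *\<^sub>v y2)" using y(2) yy mv[OF c] by simp
      moreover have "G1\<^sup>T *\<^sub>v y1 \<in> A" unfolding spanA using c G1c by auto
      moreover have "G2\<^sup>T *\<^sub>v y2 \<in> B" unfolding spanB using c G2c by auto
      ultimately show "w \<in> uuv A B" unfolding uuv_def by blast
    next
      fix w assume "w \<in> uuv A B"
      then obtain u v where e: "w = u @\<^sub>v (u + v)" "u \<in> A" "v \<in> B" unfolding uuv_def by blast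
      obtain y1 where y1: "y1 \<in> carrier_vec k1" "u = G1\<^sup>T *\<^sub>v y1" using e(2) spanA by auto
      obtain y2 where y2: "y2 \<in> carrier_vec k2" "v = G2\<^sup>T *\<^sub>v y2" using e(3) spanB by auto
      have "w = M\<^sup>T *\<^sub>v (y1 @\<^sub>v y2)" using mv[OF y1(1) y2(1)] e y1 y2 by simp
      moreover have "y1 @\<^sub>v y2 \<in> carrier_vec (k1 + k2)" using y1 y2 by auto
      moreover have "w \<in> carrier_vec (2 * n)"
        using uuv_carrier[OF lcD(1)[OF lA] lcD(1)[OF lB]] \<open>w \<in> uuv A B\<close> by auto
      ultimately show "w \<in> {w \<in> carrier_vec (2 * n). \<exists>y\<in>carrier_vec (k1 + k2). M\<^sup>T *\<^sub>v y = w}" by blast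
    qed
    finally show ?thesis .
  qed
  have lU: "linear_code (2 * n) (uuv A B)" using lc_uuv[OF lA lB] .
  have sub: "subspace class_ring (uuv A B) V2.V" using lU unfolding linear_code_def .
  have smod: "submodule class_ring (uuv A B) V2.V" using sub by simp
  interpret W: vectorspace class_ring "V2.vs (uuv A B)" using V2.subspace_is_vs[OF sub] .
  define S where "S = set (rows M)"
  have Sc: "S \<subseteq> carrier_vec (2 * n)" unfolding S_def using rows_carrier[of M] Mc by auto
  have SU: "S \<subseteq> uuv A B" using V2.in_own_span[OF Sc] span unfolding S_def by simp
  note nd = V2.span_li_not_depend[OF SU smod]
  have gen: "W.gen_set S" using nd(1) span unfolding S_def by simp
  have cardS: "card S = k1 + k2" unfolding S_def using distinct_card[OF dist] Mc by simp
  have "W.dim = k1 + k2" using dim_uuv[OF lA lB] dA dB unfolding code_dim_def by simp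
  then have "W.basis S" using W.dim_gen_is_basis[of S] gen cardS SU unfolding S_def by simp
  then have li: "\<not> V2.lin_dep S" using nd(2) unfolding W.basis_def by simp
  show ?thesis unfolding is_gen_matrix_def M_def[symmetric]
    using Mc dist li span unfolding S_def by simp
qed

theorem theorem2:
  fixes C1 C2 :: "'a::{finite,field} vec set" and G1 G2 :: "'a mat"
    and n k1 k2 d1 d2 :: nat
  assumes C1: "is_code n k1 d1 C1" and C2: "is_code n k2 d2 C2"
    and G1: "is_gen_matrix n k1 G1 C1" and G2: "is_gen_matrix n k2 G2 C2"
  shows
    "(is_code (2 * n) (k1 + k2) (min (2 * d1) d2) (uuv C1 C2) \<and>
      is_gen_matrix (2 * n) (k1 + k2) (four_block_mat G1 G1 (0\<^sub>m k2 n) G2) (uuv C1 C2))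
   \<and>
    (((\<exists>m. card (UNIV :: 'a set) = 2 ^ m) \<or> self_orth_E n C1) \<longrightarrow>
      (2 * int (code_dim n (C1 \<inter> dual_E n C2)) + int (code_dim n (hull_E n C2)) - int k1
         \<le> int (code_dim (2 * n) (hull_E (2 * n) (uuv C1 C2))) \<and>
       int (code_dim (2 * n) (hull_E (2 * n) (uuv C1 C2)))
         \<le> 2 * int (code_dim n (C1 \<inter> dual_E n C2)) + int k2 - int k1 \<and>
       (self_orth_E n C2 \<longrightarrow>
          int (code_dim (2 * n) (hull_E (2 * n) (uuv C1 C2)))
            = 2 * int (code_dim n (C1 \<inter> dual_E n C2)) + int k2 - int k1)))
   \<and>
    (\<forall>p h. prime (p::nat) \<and> even h \<and> card (UNIV :: 'a set) = p ^ h \<longrightarrow>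
      (let r = p ^ (h div 2) in
       ((\<exists>m. card (UNIV :: 'a set) = 2 ^ m) \<or> self_orth_H r n C1) \<longrightarrow>
        (2 * int (code_dim n (C1 \<inter> dual_H r n C2)) + int (code_dim n (hull_H r n C2)) - int k1
           \<le> int (code_dim (2 * n) (hull_H r (2 * n) (uuv C1 C2))) \<and>
         int (code_dim (2 * n) (hull_H r (2 * n) (uuv C1 C2)))
           \<le> 2 * int (code_dim n (C1 \<inter> dual_H r n C2)) + int k2 - int k1 \<and>
         (self_orth_H r n C2 \<longrightarrow>
            int (code_dim (2 * n) (hull_H r (2 * n) (uuv C1 C2)))
              = 2 * int (code_dim n (C1 \<inter> dual_H r n C2)) + int k2 - int k1))))"
proof -
  have lA: "linear_code n C1" and dA: "code_dim n C1 = k1" and mA: "min_distance C1 d1"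
    using C1 unfolding is_code_def by auto
  have lB: "linear_code n C2" and dB: "code_dim n C2 = k2" and mB: "min_distance C2 d2"
    using C2 unfolding is_code_def by auto
  note cA = lcD(1)[OF lA] and cB = lcD(1)[OF lB]
  have cU: "uuv C1 C2 \<subseteq> carrier_vec (2 * n)" using uuv_carrier[OF cA cB] .
  have P1: "is_code (2 * n) (k1 + k2) (min (2 * d1) d2) (uuv C1 C2) \<and>
      is_gen_matrix (2 * n) (k1 + k2) (four_block_mat G1 G1 (0\<^sub>m k2 n) G2) (uuv C1 C2)"
    unfolding is_code_def
    using lc_uuv[OF lA lB] dim_uuv[OF lA lB] dA dB min_dist_uuv[OF lA lB mA mB]
      gen_uuv[OF lA lB G1 G2 dA dB] by simp
  have P2: "((\<exists>m. card (UNIV :: 'a set) = 2 ^ m) \<or> self_orth_E n C1) \<longrightarrow>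
      (2 * int (code_dim n (C1 \<inter> dual_E n C2)) + int (code_dim n (hull_E n C2)) - int k1
         \<le> int (code_dim (2 * n) (hull_E (2 * n) (uuv C1 C2))) \<and>
       int (code_dim (2 * n) (hull_E (2 * n) (uuv C1 C2)))
         \<le> 2 * int (code_dim n (C1 \<inter> dual_E n C2)) + int k2 - int k1 \<and>
       (self_orth_E n C2 \<longrightarrow>
          int (code_dim (2 * n) (hull_E (2 * n) (uuv C1 C2)))
            = 2 * int (code_dim n (C1 \<inter> dual_E n C2)) + int k2 - int k1))"
  proof
    assume cond: "(\<exists>m. card (UNIV :: 'a set) = 2 ^ m) \<or> self_orth_E n C1"
    have dbl: "sform (\<lambda>x. x) u u' + sform (\<lambda>x. x) u u' = 0" if "u \<in> C1" "u' \<in> C1" for u u'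
      using cond
    proof
      assume "\<exists>m. card (UNIV :: 'a set) = 2 ^ m"
      then show ?thesis using char2_double by blast
    next
      assume "self_orth_E n C1"
      then have "u \<in> dualg (\<lambda>x. x) n C1" using that dual_E_eq[OF cA] unfolding self_orth_E_def by auto
      then show ?thesis using that unfolding dualg_def by auto
    qed
    note g = part2_generic[OF conj_ok_id lA lB dbl]
    have e1: "dual_E n C2 = dualg (\<lambda>x. x) n C2" using dual_E_eq[OF cB] .
    have e2: "hull_E n C2 = C2 \<inter> dualg (\<lambda>x. x) n C2" using hull_E_eq[OF cB] .
    have e3: "hull_E (2 * n) (uuv C1 C2) = uuv C1 C2 \<inter> dualg (\<lambda>x. x) (2 * n) (uuv C1 C2)"
      using hull_E_eq[OF cU] .
    have e4: "self_orth_E n C2 \<longleftrightarrow> C2 \<subseteq> dualg (\<lambda>x. x) n C2" unfolding self_orth_E_def e1 ..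
    show "2 * int (code_dim n (C1 \<inter> dual_E n C2)) + int (code_dim n (hull_E n C2)) - int k1
         \<le> int (code_dim (2 * n) (hull_E (2 * n) (uuv C1 C2))) \<and>
       int (code_dim (2 * n) (hull_E (2 * n) (uuv C1 C2)))
         \<le> 2 * int (code_dim n (C1 \<inter> dual_E n C2)) + int k2 - int k1 \<and>
       (self_orth_E n C2 \<longrightarrow>
          int (code_dim (2 * n) (hull_E (2 * n) (uuv C1 C2)))
            = 2 * int (code_dim n (C1 \<inter> dual_E n C2)) + int k2 - int k1)"
      unfolding e1 e2 e3 e4 using g dA dB by simp
  qed
  have P3: "\<forall>p h. prime (p::nat) \<and> even h \<and> card (UNIV :: 'a set) = p ^ h \<longrightarrow>
      (let r = p ^ (h div 2) in
       ((\<exists>m. card (UNIV :: 'a set) = 2 ^ m) \<or> self_orth_H r n C1) \<longrightarrow>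
        (2 * int (code_dim n (C1 \<inter> dual_H r n C2)) + int (code_dim n (hull_H r n C2)) - int k1
           \<le> int (code_dim (2 * n) (hull_H r (2 * n) (uuv C1 C2))) \<and>
         int (code_dim (2 * n) (hull_H r (2 * n) (uuv C1 C2)))
           \<le> 2 * int (code_dim n (C1 \<inter> dual_H r n C2)) + int k2 - int k1 \<and>
         (self_orth_H r n C2 \<longrightarrow>
            int (code_dim (2 * n) (hull_H r (2 * n) (uuv C1 C2)))
              = 2 * int (code_dim n (C1 \<inter> dual_H r n C2)) + int k2 - int k1)))"
  proof (intro allI impI)
    fix p h :: nat
    assume ph: "prime p \<and> even h \<and> card (UNIV :: 'a set) = p ^ h"
    define r where "r = p ^ (h div 2)"
    have co: "conj_ok (\<lambda>y::'a. y ^ r)" unfolding r_def using conj_ok_frob ph by blast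
    show "let r = p ^ (h div 2) in
       ((\<exists>m. card (UNIV :: 'a set) = 2 ^ m) \<or> self_orth_H r n C1) \<longrightarrow>
        (2 * int (code_dim n (C1 \<inter> dual_H r n C2)) + int (code_dim n (hull_H r n C2)) - int k1
           \<le> int (code_dim (2 * n) (hull_H r (2 * n) (uuv C1 C2))) \<and>
         int (code_dim (2 * n) (hull_H r (2 * n) (uuv C1 C2)))
           \<le> 2 * int (code_dim n (C1 \<inter> dual_H r n C2)) + int k2 - int k1 \<and>
         (self_orth_H r n C2 \<longrightarrow>
            int (code_dim (2 * n) (hull_H r (2 * n) (uuv C1 C2)))
              = 2 * int (code_dim n (C1 \<inter> dual_H r n C2)) + int k2 - int k1))"
      unfolding Let_def r_def[symmetric]
    proof
      assume cond: "(\<exists>m. card (UNIV :: 'a set) = 2 ^ m) \<or> self_orth_H r n C1"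
      have dbl: "sform (\<lambda>y. y ^ r) u u' + sform (\<lambda>y. y ^ r) u u' = 0" if "u \<in> C1" "u' \<in> C1" for u u'
        using cond
      proof
        assume "\<exists>m. card (UNIV :: 'a set) = 2 ^ m"
        then show ?thesis using char2_double by blast
      next
        assume "self_orth_H r n C1"
        then have "C1 \<subseteq> dualg (\<lambda>y. y ^ r) n C1" unfolding self_orth_H_def dual_H_eq .
        then have "u \<in> dualg (\<lambda>y. y ^ r) n C1" using that(1) by blast
        then show ?thesis using that unfolding dualg_def by auto
      qed
      note g = part2_generic[OF co lA lB dbl]
      have e4: "self_orth_H r n C2 \<longleftrightarrow> C2 \<subseteq> dualg (\<lambda>y. y ^ r) n C2" unfolding self_orth_H_def dual_H_eq ..
      show "2 * int (code_dim n (C1 \<inter> dual_H r n C2)) + int (code_dim n (hull_H r n C2)) - int k1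
           \<le> int (code_dim (2 * n) (hull_H r (2 * n) (uuv C1 C2))) \<and>
         int (code_dim (2 * n) (hull_H r (2 * n) (uuv C1 C2)))
           \<le> 2 * int (code_dim n (C1 \<inter> dual_H r n C2)) + int k2 - int k1 \<and>
         (self_orth_H r n C2 \<longrightarrow>
            int (code_dim (2 * n) (hull_H r (2 * n) (uuv C1 C2)))
              = 2 * int (code_dim n (C1 \<inter> dual_H r n C2)) + int k2 - int k1)"
        unfolding dual_H_eq hull_H_eq e4 using g dA dB by simp
    qed
  qed
  show ?thesis using P1 P2 P3 by blast
qed

end
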